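(* Let $G$ be a finite abelian group with $|G|\ge3$. Then (1) $[1,\mathsf{r}(G)-1]\subset\Delta^{\ast}(G)$; (2) $d-2\in\Delta^{\ast}(G)$ for every $d\ge3$ with $d\mid\exp(G)$; (3) $|n-r-1|\in\Delta^{\ast}(C_n^r)$ for all $n\ge2$, $r\ge1$ with $n\ne r+1$. In particular, $\max\Delta^{\ast}(G)\ge\max\{\mathsf{r}(G)-1,\exp(G)-2\}$.
   Context: For a subset $G_0$ of an abelian group, $\mathcal{B}(G_0)$ is the monoid of zero-sum sequences over $G_0$, with atoms the minimal zero-sum sequences; $\mathsf{L}(B)$ is the set of lengths of factorizations of $B$ into atoms. For $A\subset\mathbb{Z}$, $\Delta(A)$ is the set of $d\in\mathbb{N}$ such that some $l\in A$ has $A\cap[l,l+d]=\{l,l+d\}$, and $\Delta(G_0)=\bigcup_{B\in\mathcal{B}(G_0)}\Delta(\mathsf{L}(B))$. Then $\Delta^{\ast}(G)=\{\min\Delta(G_0): G_0\subset G,\ \Delta(G_0)\ne\emptyset\}$. If $G\cong C_{n_1}\oplus\cdots\oplus C_{n_r}$ with $1<n_1\mid\cdots\mid n_r$, then $\mathsf{r}(G)=r$ and $\exp(G)=n_r$. *)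

theory Defs
  imports Main "HOL-Library.Multiset"
begin

text \<open>The finite abelian group G is the universe of a type of class
  ab_group_add and finite.  Sequences over G are finite multisets.\<close>

definition zss :: "'a::ab_group_add set \<Rightarrow> 'a multiset set" where
  "zss G0 = {B. set_mset B \<subseteq> G0 \<and> sum_mset B = 0}"

definition is_atom :: "'a::ab_group_add set \<Rightarrow> 'a multiset \<Rightarrow> bool" where
  "is_atom G0 A \<longleftrightarrow> A \<in> zss G0 \<and> A \<noteq> {#} \<and>
     (\<forall>C. C \<subseteq># A \<longrightarrow> C \<noteq> {#} \<longrightarrow> sum_mset C = 0 \<longrightarrow> C = A)"

definition lengths :: "'a::ab_group_add set \<Rightarrow> 'a multiset \<Rightarrow> nat set" where
  "lengths G0 B = {size F | F. (\<forall>A\<in>#F. is_atom G0 A) \<and> sum_mset F = B}"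

definition delta_set :: "nat set \<Rightarrow> nat set" where
  "delta_set L = {d. 0 < d \<and> (\<exists>l\<in>L. L \<inter> {l..l+d} = {l, l+d})}"

definition Delta :: "'a::ab_group_add set \<Rightarrow> nat set" where
  "Delta G0 = (\<Union>B\<in>zss G0. delta_set (lengths G0 B))"

definition delta_star :: "'a::ab_group_add itself \<Rightarrow> nat set" where
  "delta_star (_::'a itself) = {Inf (Delta G0) | G0::'a set. Delta G0 \<noteq> {}}"

text \<open>The group C_{n_1} + ... + C_{n_r}, modelled on lists xs with xs!i < ns!i,
  with componentwise addition modulo ns!i.\<close>
definition cyc_carrier :: "nat list \<Rightarrow> nat list set" where
  "cyc_carrier ns = {xs. length xs = length ns \<and> (\<forall>i<length ns. xs ! i < ns ! i)}"

definition cyc_add :: "nat list \<Rightarrow> nat list \<Rightarrow> nat list \<Rightarrow> nat list" where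
  "cyc_add ns xs ys = map (\<lambda>i. (xs ! i + ys ! i) mod (ns ! i)) [0..<length ns]"

definition is_inv_decomp :: "'a::ab_group_add itself \<Rightarrow> nat list \<Rightarrow> bool" where
  "is_inv_decomp (_::'a itself) ns \<longleftrightarrow>
     (\<forall>i<length ns. 1 < ns ! i) \<and>
     (\<forall>i. Suc i < length ns \<longrightarrow> ns ! i dvd ns ! Suc i) \<and>
     (\<exists>f::'a \<Rightarrow> nat list. bij_betw f UNIV (cyc_carrier ns) \<and>
        (\<forall>a b. f (a + b) = cyc_add ns (f a) (f b)))"

definition group_rank :: "'a::ab_group_add itself \<Rightarrow> nat" where
  "group_rank T = (THE r. \<exists>ns. is_inv_decomp T ns \<and> length ns = r)"

definition group_exp :: "'a::ab_group_add itself \<Rightarrow> nat" where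
  "group_exp (_::'a itself) = (LEAST m. 0 < m \<and> (\<forall>g::'a. (\<Sum>_<m. g) = 0))"

end

theory Submission
  imports Defs "HOL-Computational_Algebra.Primes"
begin

primrec smul :: "nat \<Rightarrow> 'a::ab_group_add \<Rightarrow> 'a" where
  "smul 0 g = 0"
| "smul (Suc n) g = g + smul n g"

lemma smul_add_nat: "smul (a + b) g = smul a g + smul b g"
  by (induction a) (simp_all add: add.assoc)

lemma smul_mult: "smul (a * b) g = smul a (smul b g)"
  by (induction a) (simp_all add: smul_add_nat)

lemma smul_add_el: "smul a (g + h) = smul a g + smul a h"
  by (induction a) (simp_all add: algebra_simps)

lemma smul_minus_el: "smul a (- g) = - smul a g"
  by (induction a) (simp_all add: algebra_simps)

lemma smul_diff_el: "smul a (g - h) = smul a g - smul a h"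
  by (metis diff_conv_add_uminus smul_add_el smul_minus_el)

lemma smul_zero_el[simp]: "smul a 0 = 0"
  by (induction a) simp_all

lemma smul_one[simp]: "smul 1 g = g"
  by simp

lemma smul_sum_el: "smul a (\<Sum>i\<in>I. f i) = (\<Sum>i\<in>I. smul a (f i))"
  by (induction I rule: infinite_finite_induct) (simp_all add: smul_add_el)

lemma smul_sum_nat: "smul (\<Sum>i\<in>I. f i) g = (\<Sum>i\<in>I. smul (f i) g)"
  by (induction I rule: infinite_finite_induct) (simp_all add: smul_add_nat)

lemma sum_lessThan_smul: "(\<Sum>_<m. g) = smul m g"
  by (induction m) (simp_all add: add.commute)

lemma smul_mod:
  assumes "smul m g = 0" shows "smul (a mod m) g = smul a g"
proof -
  have "smul a g = smul (m * (a div m) + a mod m) g" by simp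
  also have "\<dots> = smul (m * (a div m)) g + smul (a mod m) g" by (rule smul_add_nat)
  also have "smul (m * (a div m)) g = smul (a div m) (smul m g)"
    by (metis smul_mult mult.commute)
  finally show ?thesis using assms by simp
qed

lemma smul_mult_zero: "smul m g = 0 \<Longrightarrow> smul (m * c) g = 0"
  by (metis smul_mult mult.commute smul_zero_el)

lemma sum_mset_count_smul:
  assumes "set_mset B \<subseteq> S" "finite S"
  shows "sum_mset B = (\<Sum>x\<in>S. smul (count B x) x)"
  using assms(1)
proof (induction B)
  case empty then show ?case by simp
next
  case (add x B)
  have xS: "x \<in> S" using add.prems by simp
  have IH: "sum_mset B = (\<Sum>x\<in>S. smul (count B x) x)" using add by simp
  have "(\<Sum>y\<in>S. smul (count (add_mset x B) y) y)
      = (\<Sum>y\<in>S. (if y = x then y else 0) + smul (count B y) y)"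
    by (rule sum.cong) auto
  also have "\<dots> = x + (\<Sum>y\<in>S. smul (count B y) y)"
    using xS assms(2) by (simp add: sum.distrib)
  finally show ?case using IH by simp
qed

lemma delta_from_congr:
  fixes G0 :: "'a::ab_group_add set" and D :: nat
  assumes Dpos: "0 < D"
    and cong: "\<And>B l1 l2. B \<in> zss G0 \<Longrightarrow> l1 \<in> lengths G0 B \<Longrightarrow> l2 \<in> lengths G0 B
                 \<Longrightarrow> int D dvd (int l1 - int l2)"
    and ex: "B0 \<in> zss G0" "l0 \<in> lengths G0 B0" "l0 + D \<in> lengths G0 B0"
  shows "Delta G0 \<noteq> {} \<and> Inf (Delta G0) = D"
proof -
  have DinB: "D \<in> delta_set (lengths G0 B0)"
  proof -
    have "lengths G0 B0 \<inter> {l0..l0+D} = {l0, l0+D}"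
    proof (rule set_eqI, rule iffI)
      fix x assume x: "x \<in> lengths G0 B0 \<inter> {l0..l0+D}"
      then have "int D dvd (int x - int l0)" using cong[OF ex(1)] ex(2) by auto
      then obtain c where c: "int x - int l0 = int D * c" by (auto elim: dvdE)
      have "0 \<le> int D * c" "int D * c \<le> int D" using x c by auto
      then have "c = 0 \<or> c = 1" using Dpos
        by (metis mult_le_cancel_left1 mult_right_less_imp_less not_less of_nat_0_less_iff
            zero_less_mult_iff  nless_le int_one_le_iff_zero_less linorder_neqE_linordered_idom
            mult_cancel_left1 order.antisym zero_le_mult_iff)
      then show "x \<in> {l0, l0+D}" using c by auto
    next
      fix x assume "x \<in> {l0, l0+D}" then show "x \<in> lengths G0 B0 \<inter> {l0..l0+D}"
        using ex by auto
    qed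
    then show ?thesis using Dpos ex(2) unfolding delta_set_def by blast
  qed
  then have DD: "D \<in> Delta G0" using ex(1) unfolding Delta_def by blast
  have lb: "D \<le> d" if dD: "d \<in> Delta G0" for d
  proof -
    obtain B where B: "B \<in> zss G0" "d \<in> delta_set (lengths G0 B)"
      using dD unfolding Delta_def by blast
    then obtain l where l: "0 < d" "l \<in> lengths G0 B" "lengths G0 B \<inter> {l..l+d} = {l, l+d}"
      unfolding delta_set_def by blast
    then have "l + d \<in> lengths G0 B" by blast
    then have "int D dvd (int (l+d) - int l)" using cong[OF B(1) _ l(2)] by blast
    then have "int D dvd int d" by simp
    then have "D dvd d" by simp
    then show ?thesis using l(1) by (simp add: dvd_imp_le)
  qed
  have "Inf (Delta G0) = D"
    using DD lb by (metis cInf_eq_minimum)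
  then show ?thesis using DD by blast
qed

definition lin :: "('a \<Rightarrow> int) \<Rightarrow> 'a multiset \<Rightarrow> int" where
  "lin w A = sum_mset (image_mset w A)"

lemma lin_add: "lin w (A + B) = lin w A + lin w B"
  by (simp add: lin_def)

lemma lin_sum_mset: "lin w (sum_mset F) = sum_mset (image_mset (lin w) F)"
  by (induction F) (simp_all add: lin_def)

lemma factor_invariant:
  fixes G0 :: "'a::ab_group_add set" and n :: nat and D :: int
  assumes atom: "\<And>A. is_atom G0 A \<Longrightarrow> \<exists>t. int n = lin w A + int n * D * t"
  assumes "\<forall>A\<in>#F. is_atom G0 A"
  shows "\<exists>T. int n * int (size F) = lin w (sum_mset F) + int n * D * T"
  using assms(2)
proof (induction F)
  case empty then show ?case by (simp add: lin_def)
next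
  case (add A F)
  then obtain T where T: "int n * int (size F) = lin w (sum_mset F) + int n * D * T" by auto
  obtain t where t: "int n = lin w A + int n * D * t" using atom add.prems by auto
  have "int n * int (size (add_mset A F)) = int n + int n * int (size F)" by (simp add: algebra_simps)
  also have "\<dots> = lin w (sum_mset (add_mset A F)) + int n * D * (t + T)"
    using T t by (simp add: lin_add algebra_simps)
  finally show ?case by blast
qed

lemma lengths_congr:
  fixes G0 :: "'a::ab_group_add set" and n :: nat and D :: int
  assumes atom: "\<And>A. is_atom G0 A \<Longrightarrow> \<exists>t. int n = lin w A + int n * D * t"
    and n: "0 < n"
    and l: "l1 \<in> lengths G0 B" "l2 \<in> lengths G0 B"
  shows "D dvd (int l1 - int l2)"
proof -
  obtain F1 where F1: "size F1 = l1" "\<forall>A\<in>#F1. is_atom G0 A" "sum_mset F1 = B"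
    using l(1) unfolding lengths_def by blast
  obtain F2 where F2: "size F2 = l2" "\<forall>A\<in>#F2. is_atom G0 A" "sum_mset F2 = B"
    using l(2) unfolding lengths_def by blast
  obtain T1 where T1: "int n * int l1 = lin w B + int n * D * T1"
    using factor_invariant[OF atom F1(2)] F1 by auto
  obtain T2 where T2: "int n * int l2 = lin w B + int n * D * T2"
    using factor_invariant[OF atom F2(2)] F2 by auto
  have "int n * (int l1 - int l2) = int n * (D * (T1 - T2))"
    using T1 T2 by (simp add: algebra_simps)
  then have "int l1 - int l2 = D * (T1 - T2)" using n by simp
  then show ?thesis by simp
qed

lemma lin_count: "lin (\<lambda>x. 1 + D * (if x = e then 1 else 0)) A = int (size A) + D * int (count A e)"
  by (induction A) (auto simp: lin_def algebra_simps)

lemma atom_sub: "is_atom G0 A \<Longrightarrow> Y \<subseteq># A \<Longrightarrow> Y \<noteq> {#} \<Longrightarrow> sum_mset Y = 0 \<Longrightarrow> A = Y"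
  unfolding is_atom_def by blast

lemma sub_count_le: "C \<subseteq># Y \<Longrightarrow> count C x \<le> count Y x"
  by (simp add: mset_subset_eq_count)

lemma sum_indicator_smul:
  assumes "j < (k::nat)"
  shows "(\<Sum>i<k. smul (if i = j then 1 else 0) (v i)) = (v j :: 'a::ab_group_add)"
proof -
  have "(\<Sum>i<k. smul (if i = j then 1 else 0) (v i)) = (\<Sum>i<k. if i = j then v i else 0)"
    by (rule sum.cong) auto
  also have "\<dots> = v j" using assms by (subst sum.delta) auto
  finally show ?thesis .
qed

lemma sum_smul_add_fun: "(\<Sum>i<(k::nat). smul (a i + b i) (v i)) = (\<Sum>i<k. smul (a i) (v i)) + (\<Sum>i<k. smul (b i) (v i))"
  by (simp add: smul_add_nat sum.distrib)

locale fam =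
  fixes v :: "nat \<Rightarrow> 'a::ab_group_add" and k n :: nat
  assumes n2: "2 \<le> n"
    and ind: "\<And>a c. (\<Sum>i<k. smul (a i) (v i)) = (\<Sum>i<k. smul (c i) (v i)) \<longleftrightarrow> (\<forall>i<k. a i mod n = c i mod n)"
begin

lemma ind0: "(\<Sum>i<k. smul (a i) (v i)) = 0 \<longleftrightarrow> (\<forall>i<k. a i mod n = 0)"
  using ind[of a "\<lambda>_. 0"] by simp

lemma inj_v: "inj_on v {..<k}"
proof (rule inj_onI, rule ccontr)
  fix i j assume ij: "i \<in> {..<k}" "j \<in> {..<k}" "v i = v j" "i \<noteq> j"
  have "(\<Sum>l<k. smul (if l = i then 1 else 0) (v l)) = (\<Sum>l<k. smul (if l = j then 1 else 0) (v l))"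
    using ij sum_indicator_smul[of i k v] sum_indicator_smul[of j k v] by simp
  then have "\<forall>l<k. (if l = i then 1 else 0) mod n = ((if l = j then 1 else 0)::nat) mod n"
    by (rule ind[THEN iffD1])
  then have "(if i = i then 1 else 0) mod n = ((if i = j then 1 else 0)::nat) mod n"
    using ij(1) by blast
  then show False using ij n2 by simp
qed

end

locale L1 = fam +
  fixes e0
  assumes e0_def: "e0 = - (\<Sum>i<k. v i)"
    and k1: "1 \<le> k" and nk: "n \<noteq> k + 1"
begin

definition G0 where "G0 = insert e0 (v ` {..<k})"

lemma e0_notin: "e0 \<notin> v ` {..<k}"
proof
  assume "e0 \<in> v ` {..<k}"
  then obtain j where j: "j < k" "e0 = v j" by auto
  have "(\<Sum>i<k. smul (1 + (if i = j then 1 else 0)) (v i)) = (\<Sum>i<k. v i) + v j"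
    using sum_smul_add_fun[where a="\<lambda>_. 1" and b="\<lambda>i. if i = j then 1 else 0" and k=k and v=v] sum_indicator_smul[OF j(1), where v=v]
    by simp
  also have "\<dots> = 0"
  proof -
    have "v j = - (\<Sum>i<k. v i)" by (simp only: j(2)[symmetric] e0_def)
    then show ?thesis by (simp only: add.right_inverse)
  qed
  finally have "\<forall>i<k. (1 + (if i = j then 1 else 0)) mod n = 0" by (rule ind0[THEN iffD1])
  then have A: "\<forall>i<k. (1 + (if i = j then 1 else 0::nat)) mod n = 0" .
  show False
  proof (cases "k = 1")
    case True
    have "(1 + (if j = j then 1 else 0::nat)) mod n = 0" using A j(1) by blast
    then have "n dvd 2" by (metis mod_eq_0_iff_dvd one_add_one if_True)
    then have "n \<le> 2" by (simp add: dvd_imp_le)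
    then show False using n2 nk True by simp
  next
    case False
    define i where "i = (if j = 0 then 1 else (0::nat))"
    have "i < k" "i \<noteq> j" using False j k1 unfolding i_def by auto
    then have "1 mod n = 0" using A by auto
    then show False using n2 by simp
  qed
qed

lemma sum_G0:
  assumes "set_mset B \<subseteq> G0"
  shows "sum_mset B = (\<Sum>i<k. smul (count B (v i)) (v i)) - (\<Sum>i<k. smul (count B e0) (v i))"
proof -
  have "sum_mset B = (\<Sum>x\<in>G0. smul (count B x) x)"
    using assms by (rule sum_mset_count_smul) (simp add: G0_def)
  also have "\<dots> = smul (count B e0) e0 + (\<Sum>x\<in>v ` {..<k}. smul (count B x) x)"
    unfolding G0_def using e0_notin by simp
  also have "(\<Sum>x\<in>v ` {..<k}. smul (count B x) x) = (\<Sum>i<k. smul (count B (v i)) (v i))"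
    using inj_v by (simp add: sum.reindex)
  also have "smul (count B e0) e0 = - (\<Sum>i<k. smul (count B e0) (v i))"
    by (simp add: e0_def smul_minus_el smul_sum_el)
  finally show ?thesis by simp
qed

lemma zs_iff:
  assumes "set_mset B \<subseteq> G0"
  shows "sum_mset B = 0 \<longleftrightarrow> (\<forall>i<k. count B (v i) mod n = count B e0 mod n)"
  using sum_G0[OF assms] ind[of "\<lambda>i. count B (v i)" "\<lambda>_. count B e0"] by simp

definition X where "X x = replicate_mset n x"
definition U where "U = add_mset e0 (mset_set (v ` {..<k}))"

lemma count_U: "count U x = (if x = e0 then 1 else 0) + (if x \<in> v ` {..<k} then 1 else 0)"
  unfolding U_def by simp

lemma count_X: "count (X y) x = (if x = y then n else 0)"
  unfolding X_def by simp

lemma v_ne_e0: "i < k \<Longrightarrow> v i \<noteq> e0"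
  using e0_notin by auto

lemma set_sub_G0: "C \<subseteq># Y \<Longrightarrow> set_mset Y \<subseteq> G0 \<Longrightarrow> set_mset C \<subseteq> G0"
  using set_mset_mono by blast

lemma count_out: "set_mset C \<subseteq> G0 \<Longrightarrow> x \<notin> G0 \<Longrightarrow> count C x = 0"
  by (meson count_inI subsetD)

lemma mset_eq_G0:
  assumes "set_mset C \<subseteq> G0" "set_mset Y \<subseteq> G0"
    and "count C e0 = count Y e0" "\<And>i. i < k \<Longrightarrow> count C (v i) = count Y (v i)"
  shows "C = Y"
proof (rule multiset_eqI)
  fix x show "count C x = count Y x"
  proof (cases "x \<in> G0")
    case True then show ?thesis using assms unfolding G0_def by auto
  next
    case False then show ?thesis using assms count_out by metis
  qed
qed

lemma set_U: "set_mset U \<subseteq> G0" unfolding U_def G0_def by auto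
lemma set_X: "y \<in> G0 \<Longrightarrow> set_mset (X y) \<subseteq> G0" unfolding X_def using n2 by auto

lemma atom_U: "is_atom G0 U"
proof -
  have zU: "sum_mset U = 0"
    using zs_iff[OF set_U] count_U v_ne_e0 by auto
  have "\<forall>C. C \<subseteq># U \<longrightarrow> C \<noteq> {#} \<longrightarrow> sum_mset C = 0 \<longrightarrow> C = U"
  proof (intro allI impI)
    fix C assume C: "C \<subseteq># U" "C \<noteq> {#}" "sum_mset C = 0"
    have sC: "set_mset C \<subseteq> G0" using set_sub_G0[OF C(1) set_U] .
    have c0: "count C e0 \<le> 1" using sub_count_le[OF C(1), of e0] count_U e0_notin by simp
    have ci: "count C (v i) \<le> 1" if "i < k" for i
      using sub_count_le[OF C(1), of "v i"] count_U v_ne_e0[OF that] that by simp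
    have eq: "count C (v i) = count C e0" if "i < k" for i
    proof -
      have "count C (v i) mod n = count C e0 mod n" using zs_iff[OF sC] C(3) that by blast
      then show ?thesis using ci[OF that] c0 n2 by simp
    qed
    have nz: "count C e0 \<noteq> 0"
    proof
      assume z: "count C e0 = 0"
      have "C = {#}"
        by (rule mset_eq_G0[OF sC]) (use z eq in auto)
      then show False using C(2) by simp
    qed
    from nz c0 have "count C e0 = 1" by linarith
    then show "C = U"
      by (intro mset_eq_G0[OF sC set_U]) (auto simp: count_U eq v_ne_e0 e0_notin)
  qed
  then show ?thesis using zU set_U unfolding is_atom_def zss_def U_def by auto
qed

lemma atom_X0: "is_atom G0 (X e0)"
proof -
  have sX: "set_mset (X e0) \<subseteq> G0" by (rule set_X) (simp add: G0_def)
  have zX: "sum_mset (X e0) = 0"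
    by (simp add: zs_iff[OF sX] count_X v_ne_e0)
  have "\<forall>C. C \<subseteq># X e0 \<longrightarrow> C \<noteq> {#} \<longrightarrow> sum_mset C = 0 \<longrightarrow> C = X e0"
  proof (intro allI impI)
    fix C assume C: "C \<subseteq># X e0" "C \<noteq> {#}" "sum_mset C = 0"
    have sC: "set_mset C \<subseteq> G0" using set_sub_G0[OF C(1) sX] .
    have c0: "count C e0 \<le> n" using sub_count_le[OF C(1), of e0] by (simp add: count_X)
    have ci: "count C (v i) = 0" if "i < k" for i
      using sub_count_le[OF C(1), of "v i"] v_ne_e0[OF that] by (simp add: count_X)
    have "count C e0 mod n = 0" using zs_iff[OF sC] C(3) ci k1
      by (metis less_le_trans mod_0 zero_less_one)
    then have "count C e0 = 0 \<or> count C e0 = n" using c0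
      by (metis le_neq_implies_less mod_less)
    moreover have "count C e0 \<noteq> 0"
    proof
      assume z: "count C e0 = 0"
      have "C = {#}" by (rule mset_eq_G0[OF sC]) (use z ci in auto)
      then show False using C(2) by simp
    qed
    ultimately have "count C e0 = n" by simp
    then show "C = X e0"
      by (intro mset_eq_G0[OF sC sX]) (auto simp: count_X ci v_ne_e0)
  qed
  then show ?thesis using zX sX n2 unfolding is_atom_def zss_def X_def by auto
qed

lemma atom_Xv: assumes j: "j < k" shows "is_atom G0 (X (v j))"
proof -
  have sX: "set_mset (X (v j)) \<subseteq> G0" by (rule set_X) (use j in \<open>simp add: G0_def\<close>)
  have zX: "sum_mset (X (v j)) = 0"
    by (simp add: zs_iff[OF sX] count_X v_ne_e0 j)
  have "\<forall>C. C \<subseteq># X (v j) \<longrightarrow> C \<noteq> {#} \<longrightarrow> sum_mset C = 0 \<longrightarrow> C = X (v j)"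
  proof (intro allI impI)
    fix C assume C: "C \<subseteq># X (v j)" "C \<noteq> {#}" "sum_mset C = 0"
    have sC: "set_mset C \<subseteq> G0" using set_sub_G0[OF C(1) sX] .
    have c0: "count C e0 = 0" using sub_count_le[OF C(1), of e0] v_ne_e0[OF j] by (simp add: count_X)
    have ci: "count C (v i) = 0" if "i < k" "i \<noteq> j" for i
      proof -
      have "v i \<noteq> v j" using inj_on_contraD[OF inj_v] j that by simp
      then show ?thesis using sub_count_le[OF C(1), of "v i"] by (simp add: count_X)
    qed
    have cj: "count C (v j) \<le> n" using sub_count_le[OF C(1), of "v j"] by (simp add: count_X)
    have "count C (v j) mod n = 0" using zs_iff[OF sC] C(3) c0 j by auto
    then have "count C (v j) = 0 \<or> count C (v j) = n" using cj
      by (metis le_neq_implies_less mod_less)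
    moreover have "count C (v j) \<noteq> 0"
    proof
      assume z: "count C (v j) = 0"
      have "C = {#}" by (rule mset_eq_G0[OF sC]) (use z ci c0 in auto)
      then show False using C(2) by simp
    qed
    ultimately have cjn: "count C (v j) = n" by simp
    show "C = X (v j)"
    proof (rule mset_eq_G0[OF sC sX])
      show "count C e0 = count (X (v j)) e0" using c0 v_ne_e0[OF j] by (simp add: count_X)
      fix i assume i: "i < k"
      show "count C (v i) = count (X (v j)) (v i)"
      proof (cases "i = j")
        case True then show ?thesis using cjn by (simp add: count_X)
      next
        case False
        then have "v i \<noteq> v j" using inj_on_contraD[OF inj_v] j i by simp
        then show ?thesis using ci[OF i False] by (simp add: count_X)
      qed
    qed
  qed
  then show ?thesis using zX sX n2 unfolding is_atom_def zss_def X_def by auto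
qed

end

lemma count_sum_mset_gen: "count (sum_mset F) x = sum_mset (image_mset (\<lambda>A. count A x) F)"
  by (induction F) auto

lemma sum_sum_mset_zero: "(\<forall>A\<in>#F. sum_mset A = (0::'a::ab_group_add)) \<Longrightarrow> sum_mset (sum_mset F) = 0"
  by (induction F) auto

lemma set_sum_mset_sub: "(\<forall>A\<in>#F. set_mset A \<subseteq> S) \<Longrightarrow> set_mset (sum_mset F) \<subseteq> S"
  by (induction F) auto

lemma atom_props: "is_atom G0 A \<Longrightarrow> set_mset A \<subseteq> G0 \<and> sum_mset A = 0 \<and> A \<noteq> {#}"
  unfolding is_atom_def zss_def by blast

lemma sum_lin_gen_zero:
  "(\<forall>A\<in>#F. sum_mset A = 0) \<Longrightarrow> (\<forall>A\<in>#F. set_mset A \<subseteq> S) \<Longrightarrow> sum_mset F \<in> zss S"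
  unfolding zss_def using sum_sum_mset_zero set_sum_mset_sub by blast

context L1
begin

lemma atom_class:
  assumes A: "is_atom G0 A"
  shows "A = U \<or> A = X e0 \<or> (\<exists>j<k. A = X (v j))"
proof -
  have sA: "set_mset A \<subseteq> G0" and zA: "sum_mset A = 0" and nA: "A \<noteq> {#}"
    using atom_props[OF A] by auto
  have cong: "count A (v i) mod n = count A e0 mod n" if "i < k" for i
    using zs_iff[OF sA] zA that by blast
  show ?thesis
  proof (cases "count A e0 mod n = 0")
    case True
    show ?thesis
    proof (cases "count A e0 = 0")
      case False
      then have ge: "n \<le> count A e0" using True
        by (metis mod_less not_le)
      have "X e0 \<subseteq># A"
        by (rule mset_subset_eqI) (use ge in \<open>simp add: count_X\<close>)
      then have "A = X e0"
        using atom_sub[OF A] atom_props[OF atom_X0] by blast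
      then show ?thesis by blast
    next
      case z: True
      obtain x where x: "x \<in># A" using nA by (meson multiset_nonemptyE)
      then have "x \<in> G0" using sA by blast
      moreover have "x \<noteq> e0" using x z by (metis count_inI not_in_iff) 
      ultimately obtain j where j: "j < k" "x = v j" unfolding G0_def by auto
      have "count A (v j) mod n = 0" using cong[OF j(1)] z by simp
      moreover have "count A (v j) \<noteq> 0" using x j by simp
      ultimately have ge: "n \<le> count A (v j)" by (metis mod_less not_le)
      have "X (v j) \<subseteq># A"
        by (rule mset_subset_eqI) (use ge in \<open>simp add: count_X\<close>)
      then have "A = X (v j)"
        using atom_sub[OF A] atom_props[OF atom_Xv[OF j(1)]] by blast
      then show ?thesis using j by blast
    qed
  next
    case False
    then have c0: "1 \<le> count A e0" by (metis mod_0 not_less_eq_eq le0 le_antisym One_nat_def)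
    have ci: "1 \<le> count A (v i)" if "i < k" for i
      using cong[OF that] False by (metis mod_0 not_less_eq_eq le0 le_antisym One_nat_def)
    have "U \<subseteq># A"
    proof (rule mset_subset_eqI)
      fix x show "count U x \<le> count A x"
        using c0 ci e0_notin by (auto simp: count_U)
    qed
    then have "A = U" using atom_sub[OF A] atom_props[OF atom_U] by blast
    then show ?thesis by blast
  qed
qed

lemma size_U: "size U = k + 1"
  unfolding U_def using inj_v by (simp add: card_image)

lemma count_U_e0: "count U e0 = 1"
  using e0_notin by (simp add: count_U)

definition Dp :: int where "Dp = int k + 1 - int n"

lemma atom_lin:
  assumes "is_atom G0 A"
  shows "\<exists>t. int n = lin (\<lambda>x. 1 + (- Dp) * (if x = e0 then 1 else 0)) A + int n * Dp * t"
proof -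
  have L: "lin (\<lambda>x. 1 + (- Dp) * (if x = e0 then 1 else 0)) A = int (size A) - Dp * int (count A e0)"
    using lin_count[of "- Dp" e0 A] by simp
  consider "A = U" | "A = X e0" | j where "j < k" "A = X (v j)" using atom_class[OF assms] by blast
  then show ?thesis
  proof cases
    case 1 then show ?thesis using L size_U count_U_e0 by (intro exI[of _ 0]) (simp add: Dp_def)
  next
    case 2 then show ?thesis using L by (intro exI[of _ 1]) (simp add: X_def algebra_simps)
  next
    case 3 then show ?thesis using L v_ne_e0[OF 3(1)] by (intro exI[of _ 0]) (simp add: X_def)
  qed
qed

lemma L1_result: "Delta G0 \<noteq> {} \<and> Inf (Delta G0) = nat \<bar>int n - int k - 1\<bar>"
proof -
  define F1 where "F1 = replicate_mset n U"
  define F2 where "F2 = add_mset (X e0) (image_mset (\<lambda>i. X (v i)) (mset_set {..<k}))"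
  define B where "B = sum_mset F1"
  have F1a: "\<forall>A\<in>#F1. is_atom G0 A" unfolding F1_def using atom_U by simp
  have F2a: "\<forall>A\<in>#F2. is_atom G0 A" unfolding F2_def using atom_X0 atom_Xv by auto
  have F12: "sum_mset F2 = B"
  proof (rule multiset_eqI)
    fix x
    have c1: "count B x = n * count U x"
      unfolding B_def F1_def by (simp add: count_sum_mset_gen)
    have c2: "count (sum_mset F2) x = count (X e0) x + (\<Sum>i<k. count (X (v i)) x)"
      unfolding F2_def by (simp add: count_sum_mset_gen sum_unfold_sum_mset image_mset.compositionality o_def)
    show "count (sum_mset F2) x = count B x"
    proof (cases "x \<in> v ` {..<k}")
      case True
      then obtain j where j: "j < k" "x = v j" by auto
      have "(\<Sum>i<k. count (X (v i)) x) = (\<Sum>i<k. if i = j then n else 0)"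
        using j inj_on_contraD[OF inj_v] by (intro sum.cong) (auto simp: count_X)
      also have "\<dots> = n" using j by (subst sum.delta) auto
      finally show ?thesis using c1 c2 j v_ne_e0[OF j(1)] e0_notin by (simp add: count_X count_U)
    next
      case False
      have "(\<Sum>i<k. count (X (v i)) x) = 0"
        using False by (intro sum.neutral) (auto simp: count_X)
      then show ?thesis using c1 c2 False by (simp add: count_X count_U)
    qed
  qed
  have Bz: "B \<in> zss G0"
    unfolding B_def by (rule sum_lin_gen_zero) (use F1a atom_props in blast)+
  have l1: "n \<in> lengths G0 B" unfolding lengths_def B_def using F1a
    by (auto simp: F1_def intro!: exI[of _ F1])
  have l2: "k + 1 \<in> lengths G0 B" unfolding lengths_def using F2a F12
    by (auto simp: F2_def intro!: exI[of _ F2])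
  have cong: "int (nat \<bar>Dp\<bar>) dvd (int l1 - int l2)"
    if "B' \<in> zss G0" "l1 \<in> lengths G0 B'" "l2 \<in> lengths G0 B'" for B' l1 l2
  proof -
    have "Dp dvd (int l1 - int l2)"
      by (rule lengths_congr[OF atom_lin _ that(2,3)]) (use n2 in auto)
    then show ?thesis by simp
  qed
  have Dpos: "0 < nat \<bar>Dp\<bar>" using nk by (simp add: Dp_def)
  have eqD: "nat \<bar>int n - int k - 1\<bar> = nat \<bar>Dp\<bar>" by (simp add: Dp_def abs_minus_commute)
  show ?thesis
  proof (cases "n < k + 1")
    case True
    have "n + nat \<bar>Dp\<bar> = k + 1" using True by (simp add: Dp_def)
    then show ?thesis using delta_from_congr[OF Dpos cong Bz l1] l2 eqD by simp
  next
    case False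
    have "k + 1 + nat \<bar>Dp\<bar> = n" using False by (simp add: Dp_def)
    then show ?thesis using delta_from_congr[OF Dpos cong Bz l2] l1 eqD by simp
  qed
qed

end

locale L2 = fam +
  fixes e0
  assumes e0_def: "e0 = (\<Sum>i<k. v i)"
    and k2: "2 \<le> k"
begin

definition G0 where "G0 = insert e0 (v ` {..<k})"

lemma e0_notin: "e0 \<notin> v ` {..<k}"
proof
  assume "e0 \<in> v ` {..<k}"
  then obtain j where j: "j < k" "e0 = v j" by auto
  have "(\<Sum>i<k. smul 1 (v i)) = (\<Sum>i<k. smul (if i = j then 1 else 0) (v i))"
    using sum_indicator_smul[OF j(1), where v=v] j(2) e0_def by simp
  then have A: "\<forall>i<k. (1::nat) mod n = (if i = j then 1 else 0) mod n"
    by (rule ind[THEN iffD1])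
  define i where "i = (if j = 0 then 1 else (0::nat))"
  have "i < k" "i \<noteq> j" using k2 j unfolding i_def by auto
  then have "1 mod n = 0" using A by auto
  then show False using n2 by simp
qed

lemma sum_G0:
  assumes "set_mset B \<subseteq> G0"
  shows "sum_mset B = (\<Sum>i<k. smul (count B (v i) + count B e0) (v i))"
proof -
  have "sum_mset B = (\<Sum>x\<in>G0. smul (count B x) x)"
    using assms by (rule sum_mset_count_smul) (simp add: G0_def)
  also have "\<dots> = smul (count B e0) e0 + (\<Sum>x\<in>v ` {..<k}. smul (count B x) x)"
    unfolding G0_def using e0_notin by simp
  also have "(\<Sum>x\<in>v ` {..<k}. smul (count B x) x) = (\<Sum>i<k. smul (count B (v i)) (v i))"
    using inj_v by (simp add: sum.reindex)
  also have "smul (count B e0) e0 = (\<Sum>i<k. smul (count B e0) (v i))"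
    by (simp add: e0_def smul_sum_el)
  finally show ?thesis by (simp add: sum_smul_add_fun add.commute)
qed

lemma zs_iff:
  assumes "set_mset B \<subseteq> G0"
  shows "sum_mset B = 0 \<longleftrightarrow> (\<forall>i<k. (count B (v i) + count B e0) mod n = 0)"
  using sum_G0[OF assms] ind0[of "\<lambda>i. count B (v i) + count B e0"] by simp

definition X where "X x = replicate_mset n x"
definition W where "W j = replicate_mset j e0 + (\<Sum>y\<in>v ` {..<k}. replicate_mset (n - j) y)"

lemma count_W: "count (W j) x = (if x = e0 then j else 0) + (if x \<in> v ` {..<k} then n - j else 0)"
proof -
  have "count (\<Sum>y\<in>v ` {..<k}. replicate_mset (n - j) y) x = (\<Sum>y\<in>v ` {..<k}. if x = y then n - j else 0)"
    by (simp add: count_sum)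
  also have "\<dots> = (if x \<in> v ` {..<k} then n - j else 0)"
    by (subst sum.delta') auto
  finally show ?thesis unfolding W_def by simp
qed

lemma count_X: "count (X y) x = (if x = y then n else 0)"
  unfolding X_def by simp

lemma v_ne_e0: "i < k \<Longrightarrow> v i \<noteq> e0"
  using e0_notin by auto

lemma set_sub_G0: "C \<subseteq># Y \<Longrightarrow> set_mset Y \<subseteq> G0 \<Longrightarrow> set_mset C \<subseteq> G0"
  using set_mset_mono by blast

lemma count_out: "set_mset C \<subseteq> G0 \<Longrightarrow> x \<notin> G0 \<Longrightarrow> count C x = 0"
  by (meson count_inI subsetD)

lemma mset_eq_G0:
  assumes "set_mset C \<subseteq> G0" "set_mset Y \<subseteq> G0"
    and "count C e0 = count Y e0" "\<And>i. i < k \<Longrightarrow> count C (v i) = count Y (v i)"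
  shows "C = Y"
proof (rule multiset_eqI)
  fix x show "count C x = count Y x"
  proof (cases "x \<in> G0")
    case True then show ?thesis using assms unfolding G0_def by auto
  next
    case False then show ?thesis using assms count_out by metis
  qed
qed

lemma set_W: "set_mset (W j) \<subseteq> G0"
proof
  fix x assume "x \<in># W j"
  then have "count (W j) x \<noteq> 0" by simp
  then show "x \<in> G0" unfolding count_W G0_def by (auto split: if_splits)
qed

lemma set_X: "y \<in> G0 \<Longrightarrow> set_mset (X y) \<subseteq> G0" unfolding X_def using n2 by auto

lemma k0: "0 < k" using k2 by simp

lemma atom_W: assumes j: "0 < j" "j < n" shows "is_atom G0 (W j)"
proof -
  have cWe: "count (W j) e0 = j" using e0_notin by (simp add: count_W)
  have cWv: "count (W j) (v i) = n - j" if "i < k" for i using that v_ne_e0[OF that] by (simp add: count_W)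
  have zW: "sum_mset (W j) = 0"
    using j by (simp add: zs_iff[OF set_W] cWe cWv)
  have "\<forall>C. C \<subseteq># W j \<longrightarrow> C \<noteq> {#} \<longrightarrow> sum_mset C = 0 \<longrightarrow> C = W j"
  proof (intro allI impI)
    fix C assume C: "C \<subseteq># W j" "C \<noteq> {#}" "sum_mset C = 0"
    have sC: "set_mset C \<subseteq> G0" using set_sub_G0[OF C(1) set_W] .
    have c0: "count C e0 \<le> j" using sub_count_le[OF C(1), of e0] cWe by simp
    have ci: "count C (v i) \<le> n - j" if "i < k" for i
      using sub_count_le[OF C(1), of "v i"] cWv[OF that] by simp
    have md: "(count C (v i) + count C e0) mod n = 0" if "i < k" for i
      using zs_iff[OF sC] C(3) that by blast
    have nz: "count C e0 \<noteq> 0"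
    proof
      assume z: "count C e0 = 0"
      have "count C (v i) = 0" if "i < k" for i
      proof -
        have lt: "count C (v i) < n" using ci[OF that] j by linarith
        have "count C (v i) mod n = 0" using md[OF that] z by simp
        then show ?thesis using lt by simp
      qed
      then have "C = {#}" using z by (intro mset_eq_G0[OF sC]) auto
      then show False using C(2) by simp
    qed
    have sumn: "count C (v i) + count C e0 = n" if "i < k" for i
    proof -
      have "count C (v i) + count C e0 \<le> n" using ci[OF that] c0 j by linarith
      moreover have "0 < count C (v i) + count C e0" using nz by simp
      ultimately show ?thesis
      proof (cases "count C (v i) + count C e0 < n")
        case True
        then have "(count C (v i) + count C e0) mod n = count C (v i) + count C e0" by simp
        then show ?thesis using md[OF that] nz by simp
      qed simp
    qed
    have e: "count C e0 = j"
      using sumn[OF k0] ci[OF k0] c0 j by linarith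
    show "C = W j"
    proof (rule mset_eq_G0[OF sC set_W])
      show "count C e0 = count (W j) e0" using e cWe by simp
      fix i assume "i < k" then show "count C (v i) = count (W j) (v i)"
        using sumn e cWv by fastforce
    qed
  qed
  moreover have "W j \<noteq> {#}"
  proof
    assume "W j = {#}" then have "count (W j) e0 = 0" by simp
    then show False using cWe j by simp
  qed
  ultimately show ?thesis using zW set_W unfolding is_atom_def zss_def by auto
qed

lemma atom_X0: "is_atom G0 (X e0)"
proof -
  have sX: "set_mset (X e0) \<subseteq> G0" by (rule set_X) (simp add: G0_def)
  have zX: "sum_mset (X e0) = 0"
    by (simp add: zs_iff[OF sX] count_X v_ne_e0)
  have "\<forall>C. C \<subseteq># X e0 \<longrightarrow> C \<noteq> {#} \<longrightarrow> sum_mset C = 0 \<longrightarrow> C = X e0"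
  proof (intro allI impI)
    fix C assume C: "C \<subseteq># X e0" "C \<noteq> {#}" "sum_mset C = 0"
    have sC: "set_mset C \<subseteq> G0" using set_sub_G0[OF C(1) sX] .
    have c0: "count C e0 \<le> n" using sub_count_le[OF C(1), of e0] by (simp add: count_X)
    have ci: "count C (v i) = 0" if "i < k" for i
      using sub_count_le[OF C(1), of "v i"] v_ne_e0[OF that] by (simp add: count_X)
    have "count C e0 mod n = 0" using zs_iff[OF sC] C(3) ci k0 by fastforce
    then have "count C e0 = 0 \<or> count C e0 = n" using c0
      by (metis le_neq_implies_less mod_less)
    moreover have "count C e0 \<noteq> 0"
    proof
      assume z: "count C e0 = 0"
      have "C = {#}" by (rule mset_eq_G0[OF sC]) (use z ci in auto)
      then show False using C(2) by simp
    qed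
    ultimately have "count C e0 = n" by simp
    then show "C = X e0"
      by (intro mset_eq_G0[OF sC sX]) (auto simp: count_X ci v_ne_e0)
  qed
  then show ?thesis using zX sX n2 unfolding is_atom_def zss_def X_def by auto
qed

lemma atom_Xv: assumes j: "j < k" shows "is_atom G0 (X (v j))"
proof -
  have sX: "set_mset (X (v j)) \<subseteq> G0" by (rule set_X) (use j in \<open>simp add: G0_def\<close>)
  have zX: "sum_mset (X (v j)) = 0"
    by (simp add: zs_iff[OF sX] count_X v_ne_e0 j)
  have "\<forall>C. C \<subseteq># X (v j) \<longrightarrow> C \<noteq> {#} \<longrightarrow> sum_mset C = 0 \<longrightarrow> C = X (v j)"
  proof (intro allI impI)
    fix C assume C: "C \<subseteq># X (v j)" "C \<noteq> {#}" "sum_mset C = 0"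
    have sC: "set_mset C \<subseteq> G0" using set_sub_G0[OF C(1) sX] .
    have c0: "count C e0 = 0" using sub_count_le[OF C(1), of e0] v_ne_e0[OF j] by (simp add: count_X)
    have ci: "count C (v i) = 0" if "i < k" "i \<noteq> j" for i
    proof -
      have "v i \<noteq> v j" using inj_on_contraD[OF inj_v] j that by simp
      then show ?thesis using sub_count_le[OF C(1), of "v i"] by (simp add: count_X)
    qed
    have cj: "count C (v j) \<le> n" using sub_count_le[OF C(1), of "v j"] by (simp add: count_X)
    have "count C (v j) mod n = 0" using zs_iff[OF sC] C(3) c0 j by auto
    then have "count C (v j) = 0 \<or> count C (v j) = n" using cj
      by (metis le_neq_implies_less mod_less)
    moreover have "count C (v j) \<noteq> 0"
    proof
      assume z: "count C (v j) = 0"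
      have "C = {#}" by (rule mset_eq_G0[OF sC]) (use z ci c0 in auto)
      then show False using C(2) by simp
    qed
    ultimately have cjn: "count C (v j) = n" by simp
    show "C = X (v j)"
    proof (rule mset_eq_G0[OF sC sX])
      show "count C e0 = count (X (v j)) e0" using c0 v_ne_e0[OF j] by (simp add: count_X)
      fix i assume i: "i < k"
      show "count C (v i) = count (X (v j)) (v i)"
      proof (cases "i = j")
        case True then show ?thesis using cjn by (simp add: count_X)
      next
        case False
        then have "v i \<noteq> v j" using inj_on_contraD[OF inj_v] j i by simp
        then show ?thesis using ci[OF i False] by (simp add: count_X)
      qed
    qed
  qed
  then show ?thesis using zX sX n2 unfolding is_atom_def zss_def X_def by auto
qed

end

context L2
begin

lemma atom_class:
  assumes A: "is_atom G0 A"
  shows "A = X e0 \<or> (\<exists>j<k. A = X (v j)) \<or> (\<exists>j. 0 < j \<and> j < n \<and> A = W j)"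
proof -
  have sA: "set_mset A \<subseteq> G0" and zA: "sum_mset A = 0" and nA: "A \<noteq> {#}"
    using atom_props[OF A] by auto
  have md: "(count A (v i) + count A e0) mod n = 0" if "i < k" for i
    using zs_iff[OF sA] zA that by blast
  consider "count A e0 = 0" | "n \<le> count A e0" | "0 < count A e0" "count A e0 < n" by linarith
  then show ?thesis
  proof cases
    case 1
    obtain x where x: "x \<in># A" using nA by (meson multiset_nonemptyE)
    then have "x \<in> G0" using sA by blast
    moreover have "x \<noteq> e0" using x 1 by (metis count_inI not_in_iff)
    ultimately obtain j where j: "j < k" "x = v j" unfolding G0_def by auto
    have "count A (v j) mod n = 0" using md[OF j(1)] 1 by simp
    moreover have "count A (v j) \<noteq> 0" using x j by simp
    ultimately have ge: "n \<le> count A (v j)" by (metis mod_less not_le)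
    have "X (v j) \<subseteq># A"
      by (rule mset_subset_eqI) (use ge in \<open>simp add: count_X\<close>)
    then have "A = X (v j)"
      using atom_sub[OF A] atom_props[OF atom_Xv[OF j(1)]] by blast
    then show ?thesis using j by blast
  next
    case 2
    have "X e0 \<subseteq># A"
      by (rule mset_subset_eqI) (use 2 in \<open>simp add: count_X\<close>)
    then have "A = X e0"
      using atom_sub[OF A] atom_props[OF atom_X0] by blast
    then show ?thesis by blast
  next
    case 3
    have ci: "n - count A e0 \<le> count A (v i)" if "i < k" for i
    proof (rule ccontr)
      assume "\<not> ?thesis"
      then have lt: "count A (v i) + count A e0 < n" using 3 by linarith
      then have "(count A (v i) + count A e0) mod n = count A (v i) + count A e0" by simp
      then show False using md[OF that] 3 by simp
    qed
    have "W (count A e0) \<subseteq># A"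
    proof (rule mset_subset_eqI)
      fix x show "count (W (count A e0)) x \<le> count A x"
        using ci e0_notin by (auto simp: count_W)
    qed
    then have "A = W (count A e0)" using atom_sub[OF A] atom_props[OF atom_W[OF 3]] by blast
    then show ?thesis using 3 by blast
  qed
qed

lemma size_W: "j \<le> n \<Longrightarrow> size (W j) = j + k * (n - j)"
  unfolding W_def using inj_v by (simp add: card_image)

definition Dq :: int where "Dq = int k - 1"

lemma atom_lin:
  assumes "is_atom G0 A"
  shows "\<exists>t. int n = lin (\<lambda>x. 1 + Dq * (if x = e0 then 1 else 0)) A + int n * Dq * t"
proof -
  have L: "lin (\<lambda>x. 1 + Dq * (if x = e0 then 1 else 0)) A = int (size A) + Dq * int (count A e0)"
    by (rule lin_count)
  consider "A = X e0" | j where "j < k" "A = X (v j)" | j where "0 < j" "j < n" "A = W j"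
    using atom_class[OF assms] by blast
  then show ?thesis
  proof cases
    case 1 then show ?thesis using L by (intro exI[of _ "-1"]) (simp add: X_def algebra_simps)
  next
    case 2 then show ?thesis using L v_ne_e0[OF 2(1)] by (intro exI[of _ 0]) (simp add: X_def)
  next
    case 3
    have cW: "count (W j) e0 = j" using e0_notin by (simp add: count_W)
    have sW: "int (size (W j)) = int j + int k * (int n - int j)" using size_W[of j] 3 by (simp add: of_nat_diff)
    show ?thesis using L 3 cW sW by (intro exI[of _ "-1"]) (simp add: Dq_def algebra_simps)
  qed
qed

lemma L2_result: "Delta G0 \<noteq> {} \<and> Inf (Delta G0) = k - 1"
proof -
  define F1 where "F1 = {#W 1, W (n - 1)#}"
  define F2 where "F2 = add_mset (X e0) (image_mset (\<lambda>i. X (v i)) (mset_set {..<k}))"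
  define B where "B = sum_mset F1"
  have F1a: "\<forall>A\<in>#F1. is_atom G0 A" unfolding F1_def using atom_W n2 by auto
  have F2a: "\<forall>A\<in>#F2. is_atom G0 A" unfolding F2_def using atom_X0 atom_Xv by auto
  have F12: "sum_mset F2 = B"
  proof (rule multiset_eqI)
    fix x
    have c1: "count B x = count (W 1) x + count (W (n - 1)) x"
      unfolding B_def F1_def by simp
    have c2: "count (sum_mset F2) x = count (X e0) x + (\<Sum>i<k. count (X (v i)) x)"
      unfolding F2_def by (simp add: count_sum_mset_gen sum_unfold_sum_mset image_mset.compositionality o_def)
    show "count (sum_mset F2) x = count B x"
    proof (cases "x \<in> v ` {..<k}")
      case True
      then obtain j where j: "j < k" "x = v j" by auto
      have "(\<Sum>i<k. count (X (v i)) x) = (\<Sum>i<k. if i = j then n else 0)"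
        using j inj_on_contraD[OF inj_v] by (intro sum.cong) (auto simp: count_X)
      also have "\<dots> = n" using j by (subst sum.delta) auto
      finally show ?thesis using c1 c2 j v_ne_e0[OF j(1)] e0_notin n2 by (simp add: count_X count_W)
    next
      case False
      have "(\<Sum>i<k. count (X (v i)) x) = 0"
        using False by (intro sum.neutral) (auto simp: count_X)
      then show ?thesis using c1 c2 False n2 by (simp add: count_X count_W)
    qed
  qed
  have Bz: "B \<in> zss G0"
    unfolding B_def by (rule sum_lin_gen_zero) (use F1a atom_props in blast)+
  have l1: "2 \<in> lengths G0 B" unfolding lengths_def B_def using F1a
    by (auto simp: F1_def intro!: exI[of _ F1])
  have l2: "k + 1 \<in> lengths G0 B" unfolding lengths_def using F2a F12
    by (auto simp: F2_def intro!: exI[of _ F2])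
  have cong: "int (k - 1) dvd (int l1 - int l2)"
    if "B' \<in> zss G0" "l1 \<in> lengths G0 B'" "l2 \<in> lengths G0 B'" for B' l1 l2
  proof -
    have "Dq dvd (int l1 - int l2)"
      by (rule lengths_congr[OF atom_lin _ that(2,3)]) (use n2 in auto)
    then show ?thesis using k2 by (simp add: Dq_def of_nat_diff)
  qed
  have Dpos: "0 < k - 1" using k2 by simp
  have "2 + (k - 1) = k + 1" using k2 by simp
  then show ?thesis using delta_from_congr[OF Dpos cong Bz l1] l2 by simp
qed

end

definition ord :: "'a::ab_group_add \<Rightarrow> nat" where
  "ord g = (LEAST t. 0 < t \<and> smul t g = 0)"

lemma ex_ord: "\<exists>t>0. smul t (g::'a::{ab_group_add,finite}) = 0"
proof -
  have "\<not> inj (\<lambda>t::nat. smul t g)"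
  proof
    assume "inj (\<lambda>t::nat. smul t g)"
    then have "infinite (range (\<lambda>t::nat. smul t g))"
      using finite_imageD infinite_UNIV_nat by blast
    then show False by simp
  qed
  then obtain i j where ij: "i \<noteq> j" "smul i g = smul j g" unfolding inj_def by blast
  show ?thesis
  proof (cases "i < j")
    case True
    have "smul j g = smul i g + smul (j - i) g" using True by (simp add: smul_add_nat[symmetric])
    then have "smul (j - i) g = 0" using ij by simp
    then show ?thesis using True by (intro exI[of _ "j - i"]) simp
  next
    case False
    then have lt: "j < i" using ij by simp
    have "smul i g = smul j g + smul (i - j) g" using lt by (simp add: smul_add_nat[symmetric])
    then have "smul (i - j) g = 0" using ij by simp
    then show ?thesis using lt by (intro exI[of _ "i - j"]) simp
  qed
qed

lemma ord_prop: "0 < ord (g::'a::{ab_group_add,finite}) \<and> smul (ord g) g = 0"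
  unfolding ord_def by (rule LeastI_ex) (use ex_ord in blast)

lemma ord_pos: "0 < ord (g::'a::{ab_group_add,finite})" using ord_prop by blast
lemma ord_smul: "smul (ord g) (g::'a::{ab_group_add,finite}) = 0" using ord_prop by blast

lemma ord_min: "0 < t \<Longrightarrow> smul t g = 0 \<Longrightarrow> ord g \<le> t"
  unfolding ord_def by (rule Least_le) simp

lemma ord_dvd: "smul t (g::'a::{ab_group_add,finite}) = 0 \<longleftrightarrow> ord g dvd t"
proof
  assume t: "smul t g = 0"
  have "smul (t mod ord g) g = 0" using smul_mod[OF ord_smul, of t g] t by simp
  moreover have "t mod ord g < ord g" using ord_pos[of g] by simp
  ultimately have "t mod ord g = 0" using ord_min by (metis not_gr0 not_le)
  then show "ord g dvd t" by (simp add: mod_eq_0_iff_dvd)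
next
  assume "ord g dvd t"
  then obtain c where "t = ord g * c" by (auto elim: dvdE)
  then show "smul t g = 0" using smul_mult_zero[OF ord_smul] by simp
qed

lemma smul_eq_iff: "smul a g = smul c (g::'a::{ab_group_add,finite}) \<longleftrightarrow> a mod ord g = c mod ord g"
proof
  assume "a mod ord g = c mod ord g"
  then show "smul a g = smul c g" using smul_mod[OF ord_smul, of a g] smul_mod[OF ord_smul, of c g] by simp
next
  assume eq: "smul a g = smul c g"
  show "a mod ord g = c mod ord g"
  proof (cases "a \<le> c")
    case True
    have "smul c g = smul a g + smul (c - a) g" using True by (simp add: smul_add_nat[symmetric])
    then have "smul (c - a) g = 0" using eq by simp
    then have "ord g dvd (c - a)" using ord_dvd by blast
    then show ?thesis using True by (metis mod_eq_dvd_iff_nat)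
  next
    case False
    have "smul a g = smul c g + smul (a - c) g" using False by (simp add: smul_add_nat[symmetric])
    then have "smul (a - c) g = 0" using eq by simp
    then have "ord g dvd (a - c)" using ord_dvd by blast
    then show ?thesis using False by (metis mod_eq_dvd_iff_nat nat_le_linear)
  qed
qed

lemma ord_eq_iff: "0 < n \<Longrightarrow> (\<forall>t. smul t (g::'a::{ab_group_add,finite}) = 0 \<longleftrightarrow> n dvd t) \<Longrightarrow> ord g = n"
  using ord_dvd by (metis dvd_antisym dvd_refl)

lemma ord_smul_div:
  assumes "c dvd ord (g::'a::{ab_group_add,finite})" "0 < c"
  shows "ord (smul c g) = ord g div c"
proof (rule ord_eq_iff)
  obtain d where d: "ord g = c * d" using assms(1) by (auto elim: dvdE)
  show "0 < ord g div c" using d ord_pos[of g] assms(2) by simp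
  show "\<forall>t. smul t (smul c g) = 0 \<longleftrightarrow> ord g div c dvd t"
  proof
    fix t
    have "smul t (smul c g) = smul (c * t) g" by (metis smul_mult mult.commute)
    then show "smul t (smul c g) = 0 \<longleftrightarrow> ord g div c dvd t"
      using ord_dvd[of "c * t" g] d assms(2) by simp
  qed
qed

lemma ord_add_coprime:
  assumes cop: "coprime (ord x) (ord (y::'a::{ab_group_add,finite}))"
  shows "ord (x + y) = ord x * ord y"
proof (rule ord_eq_iff)
  show "0 < ord x * ord y" by (simp add: ord_pos)
  show "\<forall>t. smul t (x + y) = 0 \<longleftrightarrow> ord x * ord y dvd t"
  proof
    fix t
    show "smul t (x + y) = 0 \<longleftrightarrow> ord x * ord y dvd t"
    proof
      assume t: "smul t (x + y) = 0"
      then have tx: "smul t x = - smul t y" by (simp add: smul_add_el eq_neg_iff_add_eq_0)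
      have "smul (ord y * t) x = smul (ord y) (smul t x)" by (simp add: smul_mult)
      also have "\<dots> = - smul t (smul (ord y) y)" using tx
        by (simp add: smul_minus_el smul_mult[symmetric] mult.commute)
      also have "\<dots> = 0" by (simp add: ord_smul)
      finally have "ord x dvd ord y * t" using ord_dvd by blast
      then have dx: "ord x dvd t" using cop by (simp add: coprime_dvd_mult_right_iff)
      have ty: "smul t y = - smul t x" using tx by simp
      have "smul (ord x * t) y = smul (ord x) (smul t y)" by (simp add: smul_mult)
      also have "\<dots> = - smul t (smul (ord x) x)" using ty
        by (simp add: smul_minus_el smul_mult[symmetric] mult.commute)
      also have "\<dots> = 0" by (simp add: ord_smul)
      finally have "ord y dvd ord x * t" using ord_dvd by blast
      then have dy: "ord y dvd t" using cop by (simp add: coprime_dvd_mult_right_iff coprime_commute)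
      show "ord x * ord y dvd t" using dx dy cop by (simp add: divides_mult)
    next
      assume "ord x * ord y dvd t"
      then have "ord x dvd t" "ord y dvd t" by (auto intro: dvd_mult_left dvd_mult_right)
      then have "smul t x = 0" "smul t y = 0" using ord_dvd by blast+
      then show "smul t (x + y) = 0" by (simp add: smul_add_el)
    qed
  qed
qed

definition subgrp :: "'a::ab_group_add set \<Rightarrow> bool" where
  "subgrp H \<longleftrightarrow> 0 \<in> H \<and> (\<forall>x\<in>H. \<forall>y\<in>H. x + y \<in> H) \<and> (\<forall>x\<in>H. - x \<in> H)"

lemma subgrp_0: "subgrp H \<Longrightarrow> 0 \<in> H" unfolding subgrp_def by blast
lemma subgrp_add: "subgrp H \<Longrightarrow> x \<in> H \<Longrightarrow> y \<in> H \<Longrightarrow> x + y \<in> H" unfolding subgrp_def by blast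
lemma subgrp_neg: "subgrp H \<Longrightarrow> x \<in> H \<Longrightarrow> - x \<in> H" unfolding subgrp_def by blast
lemma subgrp_diff: "subgrp H \<Longrightarrow> x \<in> H \<Longrightarrow> y \<in> H \<Longrightarrow> x - y \<in> H"
  using subgrp_add subgrp_neg by (metis diff_conv_add_uminus)
lemma subgrp_smul: "subgrp H \<Longrightarrow> x \<in> H \<Longrightarrow> smul t x \<in> H"
  by (induction t) (auto intro: subgrp_0 subgrp_add)
lemma subgrp_sum: "subgrp H \<Longrightarrow> (\<And>i. i \<in> I \<Longrightarrow> f i \<in> H) \<Longrightarrow> sum f I \<in> H"
  by (induction I rule: infinite_finite_induct) (auto intro: subgrp_0 subgrp_add)

lemma max_ord_dvd:
  fixes H :: "'a::{ab_group_add,finite} set"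
  assumes sH: "subgrp H" and gH: "g \<in> H" and mx: "\<forall>h\<in>H. ord h \<le> ord g" and hH: "h \<in> H"
  shows "ord h dvd ord g"
proof (rule ccontr)
  assume nd: "\<not> ord h dvd ord g"
  define t where "t = ord h"
  define m where "m = ord g"
  have t0: "t \<noteq> 0" and m0: "m \<noteq> 0" using ord_pos unfolding t_def m_def by (metis not_gr0)+
  obtain p where p: "prime p" "multiplicity p t > multiplicity p m"
    using nd multiplicity_le_imp_dvd[OF t0, of m] unfolding t_def m_def by (metis not_le)
  define e where "e = multiplicity p t"
  define f where "f = multiplicity p m"
  have pnu: "\<not> is_unit p" using p(1) by (simp add: prime_nat_iff)
  obtain m' where m': "m = p ^ f * m'" "\<not> p dvd m'"
    using multiplicity_decompose'[OF m0 pnu] unfolding f_def by metis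
  have pe: "p ^ e dvd t" unfolding e_def by (rule multiplicity_dvd)
  have p2: "2 \<le> p" using p(1) by (simp add: prime_ge_2_nat)
  have m'0: "0 < m'" using m' m0 by (metis mult_0_right not_gr0)
  define g' where "g' = smul (p ^ f) g"
  define h' where "h' = smul (t div p ^ e) h"
  have og': "ord g' = m'"
  proof -
    have "ord g' = m div p ^ f" unfolding g'_def m_def
      by (rule ord_smul_div) (use m' p2 in \<open>auto simp: m_def\<close>)
    then show ?thesis using m' p2 by simp
  qed
  have oh': "ord h' = p ^ e"
  proof -
    obtain q where q: "t = p ^ e * q" using pe by (auto elim: dvdE)
    have q0: "0 < q" using q t0 by (metis mult_0_right not_gr0)
    have "t div p ^ e = q" using q p2 by simp
    have "ord h' = t div (t div p ^ e)" unfolding h'_def t_def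
      by (rule ord_smul_div) (use q q0 p2 in \<open>auto simp: t_def\<close>)
    then show ?thesis using q q0 p2 by simp
  qed
  have cop: "coprime m' (p ^ e)"
  proof -
    have "coprime p m'" using m'(2) p(1) by (simp add: prime_imp_coprime)
    then show ?thesis by (simp add: coprime_commute)
  qed
  have "ord (g' + h') = m' * p ^ e" using ord_add_coprime[of g' h'] og' oh' cop by simp
  moreover have "g' + h' \<in> H" unfolding g'_def h'_def using sH gH hH by (intro subgrp_add subgrp_smul)
  ultimately have le: "m' * p ^ e \<le> m" using mx unfolding m_def by metis
  have "f < e" using p unfolding e_def f_def by simp
  then have "p ^ f < p ^ e" using p2 by (simp add: power_strict_increasing)
  then have "m < m' * p ^ e" using m' m'0 by (simp add: mult.commute)
  then show False using le by simp
qed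

lemma smul_comm: "smul a (smul b g) = smul b (smul a g)"
  by (metis smul_mult mult.commute)

lemma complement:
  fixes H :: "'a::{ab_group_add,finite} set"
  assumes sH: "subgrp H" and gH: "g \<in> H" and expo: "\<forall>h\<in>H. smul (ord g) h = 0"
  shows "\<exists>K. subgrp K \<and> K \<subseteq> H \<and> (\<forall>t. smul t g \<in> K \<longrightarrow> smul t g = 0)
           \<and> (\<forall>h\<in>H. \<exists>k\<in>K. \<exists>t. h = k + smul t g)"
proof -
  define m where "m = ord g"
  have m0: "0 < m" unfolding m_def by (rule ord_pos)
  define C where "C = {K. subgrp K \<and> K \<subseteq> H \<and> (\<forall>t. smul t g \<in> K \<longrightarrow> smul t g = 0)}"
  have C0: "{0} \<in> C" unfolding C_def subgrp_def using subgrp_0[OF sH] by auto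
  have fC: "finite C" by simp
  define M where "M = Max (card ` C)"
  have "M \<in> card ` C" unfolding M_def using fC C0 by (intro Max_in) auto
  then obtain K where KC: "K \<in> C" and KM: "card K = M" by auto
  have maxK: "card K' \<le> card K" if "K' \<in> C" for K'
    using Max_ge[of "card ` C" "card K'"] fC that KM unfolding M_def by auto
  have sK: "subgrp K" and KH: "K \<subseteq> H" and Kg: "\<And>t. smul t g \<in> K \<Longrightarrow> smul t g = 0"
    using KC unfolding C_def by auto
  define S where "S = {k + smul t g | k t. k \<in> K}"
  have KS: "K \<subseteq> S"
  proof
    fix x assume "x \<in> K" moreover have "x = x + smul 0 g" by simp
    ultimately show "x \<in> S" unfolding S_def by blast
  qed
  have gS: "smul t g \<in> S" for t
  proof -
    have "smul t g = 0 + smul t g" by simp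
    then show ?thesis unfolding S_def using subgrp_0[OF sK] by blast
  qed
  have S_add: "x + y \<in> S" if asm: "x \<in> S" "y \<in> S" for x y
  proof -
    obtain k1 t1 where 1: "x = k1 + smul t1 g" "k1 \<in> K" using asm(1) unfolding S_def by auto
    obtain k2 t2 where 2: "y = k2 + smul t2 g" "k2 \<in> K" using asm(2) unfolding S_def by auto
    have "x + y = (k1 + k2) + smul (t1 + t2) g" using 1 2 by (simp add: smul_add_nat algebra_simps)
    then show ?thesis unfolding S_def using subgrp_add[OF sK 1(2) 2(2)] by blast
  qed
  have S_subK: "x - k \<in> S" if asm: "x \<in> S" "k \<in> K" for x k
  proof -
    obtain k1 t1 where 1: "x = k1 + smul t1 g" "k1 \<in> K" using asm(1) unfolding S_def by auto
    have "x - k = (k1 - k) + smul t1 g" using 1 by (simp add: algebra_simps)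
    then show ?thesis unfolding S_def using subgrp_diff[OF sK 1(2) asm(2)] by blast
  qed
  have S_smul: "smul c x \<in> S" if asm: "x \<in> S" for x c
  proof -
    obtain k1 t1 where 1: "x = k1 + smul t1 g" "k1 \<in> K" using asm unfolding S_def by auto
    have "smul c x = smul c k1 + smul (c * t1) g" using 1 by (simp add: smul_add_el smul_mult)
    then show ?thesis unfolding S_def using subgrp_smul[OF sK 1(2)] by blast
  qed
  have "\<forall>h\<in>H. h \<in> S"
  proof (rule ccontr)
    assume "\<not> (\<forall>h\<in>H. h \<in> S)"
    then obtain h0 where h0: "h0 \<in> H" "h0 \<notin> S" by blast
    define T where "T = {t. 0 < t \<and> smul t h0 \<in> S}"
    have mT: "m \<in> T" unfolding T_def using m0 expo h0(1) gS[of 0] by (simp add: m_def)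
    define t0 where "t0 = (LEAST t. t \<in> T)"
    have t0T: "t0 \<in> T" unfolding t0_def using mT by (rule LeastI)
    have t0min: "\<And>t. t \<in> T \<Longrightarrow> t0 \<le> t" unfolding t0_def by (rule Least_le)
    have t0pos: "0 < t0" using t0T unfolding T_def by simp
    have "t0 \<noteq> 1" using t0T h0(2) unfolding T_def by auto
    then obtain p where p: "prime p" "p dvd t0" using prime_factor_nat by blast
    have p2: "2 \<le> p" using p(1) by (simp add: prime_ge_2_nat)
    define h1 where "h1 = smul (t0 div p) h0"
    have h1H: "h1 \<in> H" unfolding h1_def using sH h0(1) by (rule subgrp_smul)
    have ph1: "smul p h1 \<in> S"
    proof -
      have "smul p h1 = smul (p * (t0 div p)) h0" unfolding h1_def by (simp add: smul_mult)
      also have "p * (t0 div p) = t0" using p(2) by simp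
      finally show ?thesis using t0T unfolding T_def by simp
    qed
    have h1S: "h1 \<notin> S"
    proof
      assume "h1 \<in> S"
      then have "t0 div p \<in> T" unfolding T_def h1_def using p(2) t0pos p2
        by (auto simp: dvd_div_eq_0_iff elim!: dvdE)
      moreover have "t0 div p < t0" using t0pos p2 by simp
      ultimately show False using t0min by (metis not_le)
    qed
    obtain h2 where h2: "h2 \<in> H" "h2 \<notin> S" "smul p h2 \<in> K"
    proof (cases "p dvd m")
      case False
      have cop: "coprime p m" using False p(1) by (simp add: prime_imp_coprime)
      obtain x y where xy: "p * x = m * y + gcd p m" using bezout_nat[of p m] p2 by auto
      then have xy1: "p * x = m * y + 1" using cop by simp
      have "smul (p * x) h1 = smul y (smul m h1) + h1"
        by (simp only: xy1 smul_add_nat) (simp add: smul_mult mult.commute[of m y])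
      also have "smul m h1 = 0" using expo h1H by (simp add: m_def)
      finally have "h1 = smul (p * x) h1" by simp
      also have "\<dots> = smul x (smul p h1)" by (simp add: smul_mult mult.commute[of p x])
      finally have eqh: "h1 = smul x (smul p h1)" .
      have "smul x (smul p h1) \<in> S" by (rule S_smul[OF ph1])
      then have "h1 \<in> S" using eqh by metis
      then show ?thesis using h1S by simp
    next
      case True
      define q where "q = m div p"
      have mq: "m = p * q" unfolding q_def using True by simp
      have q0: "0 < q" using mq m0 by (metis mult_0_right not_gr0)
      obtain k a where ka: "smul p h1 = k + smul a g" "k \<in> K" using ph1 unfolding S_def by auto
      have "smul q (smul p h1) = smul m h1" by (metis mq smul_mult mult.commute)
      also have "\<dots> = 0" using expo h1H by (simp add: m_def)
      finally have "smul q k + smul (q * a) g = 0" using ka by (simp add: smul_add_el smul_mult)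
      then have "smul (q * a) g = - smul q k" by (simp add: eq_neg_iff_add_eq_0 add.commute)
      moreover have "- smul q k \<in> K" using sK ka(2) by (intro subgrp_neg subgrp_smul)
      ultimately have "smul (q * a) g \<in> K" by simp
      then have "smul (q * a) g = 0" by (rule Kg)
      then have "m dvd q * a" using ord_dvd unfolding m_def by blast
      then have "p dvd a" using mq q0 by (simp add: mult.commute)
      then obtain b where b: "a = p * b" by (auto elim: dvdE)
      define h2 where "h2 = h1 - smul b g"
      have "smul p h2 = smul p h1 - smul (p * b) g" unfolding h2_def by (simp add: smul_diff_el smul_mult)
      then have "smul p h2 = k" using ka b by simp
      moreover have "h2 \<in> H" unfolding h2_def using sH h1H gH by (intro subgrp_diff subgrp_smul)
      moreover have "h2 \<notin> S"
      proof
        assume "h2 \<in> S"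
        then have "h2 + smul b g \<in> S" using S_add gS by blast
        then show False using h1S unfolding h2_def by simp
      qed
      ultimately show ?thesis using that ka(2) by blast
    qed
    define K' where "K' = {k + smul c h2 | k c. k \<in> K}"
    have sK': "subgrp K'"
    proof -
      have "(0::'a) = 0 + smul 0 h2" by simp
      then have "0 \<in> K'" unfolding K'_def using subgrp_0[OF sK] by blast
      moreover have "x + y \<in> K'" if asm: "x \<in> K'" "y \<in> K'" for x y
      proof -
        obtain k1 c1 where 1: "x = k1 + smul c1 h2" "k1 \<in> K" using asm(1) unfolding K'_def by auto
        obtain k2 c2 where 2: "y = k2 + smul c2 h2" "k2 \<in> K" using asm(2) unfolding K'_def by auto
        have "x + y = (k1 + k2) + smul (c1 + c2) h2" using 1 2 by (simp add: smul_add_nat algebra_simps)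
        then show ?thesis unfolding K'_def using subgrp_add[OF sK 1(2) 2(2)] by blast
      qed
      moreover have "- x \<in> K'" if asm: "x \<in> K'" for x
      proof -
        obtain k1 c1 where 1: "x = k1 + smul c1 h2" "k1 \<in> K" using asm unfolding K'_def by auto
        have e: "smul (p * c1) h2 = smul ((p - 1) * c1) h2 + smul c1 h2"
        proof -
          have "p * c1 = (p - 1) * c1 + c1" using p2 by (simp add: algebra_simps)
          then show ?thesis by (simp add: smul_add_nat)
        qed
        have P: "smul c1 (smul p h2) = smul ((p - 1) * c1) h2 + smul c1 h2"
        proof -
          have "smul c1 (smul p h2) = smul (p * c1) h2" by (metis smul_mult mult.commute)
          then show ?thesis using e by simp
        qed
        have "- x = (- k1 - smul c1 (smul p h2)) + smul ((p - 1) * c1) h2"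
          unfolding P 1 by (simp add: algebra_simps)
        moreover have "- k1 - smul c1 (smul p h2) \<in> K"
          by (rule subgrp_diff[OF sK subgrp_neg[OF sK 1(2)] subgrp_smul[OF sK h2(3)]])
        ultimately show ?thesis unfolding K'_def by blast
      qed
      ultimately show ?thesis unfolding subgrp_def by blast
    qed
    have K'H: "K' \<subseteq> H"
      unfolding K'_def using KH sH h2(1) by (auto intro: subgrp_add subgrp_smul)
    have K'g: "smul s g = 0" if asm: "smul s g \<in> K'" for s
    proof -
      obtain k c where kc: "smul s g = k + smul c h2" "k \<in> K" using asm unfolding K'_def by auto
      define r where "r = c mod p"
      have "smul c h2 = smul (c div p) (smul p h2) + smul r h2"
      proof -
        have "c = (c div p) * p + r" unfolding r_def by simp
        then have "smul c h2 = smul ((c div p) * p) h2 + smul r h2" by (metis smul_add_nat)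
        then show ?thesis by (simp add: smul_mult)
      qed
      define k'' where "k'' = k + smul (c div p) (smul p h2)"
      have k''K: "k'' \<in> K" unfolding k''_def by (rule subgrp_add[OF sK kc(2) subgrp_smul[OF sK h2(3)]])
      have eq: "smul s g = k'' + smul r h2" using kc \<open>smul c h2 = _\<close> unfolding k''_def by (simp add: add.assoc)
      show ?thesis
      proof (cases "r = 0")
        case True
        then have "smul s g = k''" using eq by simp
        then have "smul s g \<in> K" using k''K by simp
        then show ?thesis by (rule Kg)
      next
        case False
        have rp: "r < p" unfolding r_def using p2 by simp
        have "\<not> p dvd r" using False rp by (auto dest: dvd_imp_le)
        then have cop: "coprime r p" using p(1) by (simp add: prime_imp_coprime coprime_commute)
        obtain x y where "r * x = p * y + gcd r p" using bezout_nat[of r p] False by auto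
        then have xy: "r * x = p * y + 1" using cop by simp
        have rS: "smul r h2 \<in> S"
        proof -
          have "smul r h2 = (- k'') + smul s g" using eq by (simp add: algebra_simps)
          then show ?thesis unfolding S_def using subgrp_neg[OF sK k''K] by blast
        qed
        have "smul (r * x) h2 = smul y (smul p h2) + h2"
          by (simp only: xy smul_add_nat) (simp add: smul_mult mult.commute[of p y])
        then have E: "smul x (smul r h2) = smul y (smul p h2) + h2" by (metis smul_mult mult.commute)
        have "h2 = smul x (smul r h2) - smul y (smul p h2)"
          unfolding E by simp
        moreover have "smul x (smul r h2) \<in> S" using S_smul[OF rS] .
        moreover have "smul y (smul p h2) \<in> K" using sK h2(3) by (rule subgrp_smul)
        ultimately have "h2 \<in> S" using S_subK by metis
        then show ?thesis using h2(2) by simp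
      qed
    qed
    have K'C: "K' \<in> C" unfolding C_def using sK' K'H K'g by blast
    have "K \<subset> K'"
    proof
      show "K \<subseteq> K'"
      proof
        fix x assume "x \<in> K" moreover have "x = x + smul 0 h2" by simp
        ultimately show "x \<in> K'" unfolding K'_def by blast
      qed
      have "h2 = 0 + smul 1 h2" by simp
      then have "h2 \<in> K'" unfolding K'_def using subgrp_0[OF sK] by blast
      moreover have "h2 \<notin> K" using h2(2) KS by blast
      ultimately show "K \<noteq> K'" by blast
    qed
    then have "card K < card K'" by (simp add: psubset_card_mono)
    then show False using maxK[OF K'C] by simp
  qed
  then show ?thesis using sK KH Kg unfolding S_def by blast
qed

definition chain :: "nat list \<Rightarrow> bool" where
  "chain ns \<longleftrightarrow> (\<forall>i<length ns. 1 < ns ! i) \<and> (\<forall>i. Suc i < length ns \<longrightarrow> ns ! i dvd ns ! Suc i)"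

definition indep :: "(nat \<Rightarrow> 'a::ab_group_add) \<Rightarrow> nat list \<Rightarrow> bool" where
  "indep b ns \<longleftrightarrow> (\<forall>a c. (\<Sum>i<length ns. smul (a i) (b i)) = (\<Sum>i<length ns. smul (c i) (b i))
      \<longleftrightarrow> (\<forall>i<length ns. a i mod ns ! i = c i mod ns ! i))"

definition spans :: "'a::ab_group_add set \<Rightarrow> (nat \<Rightarrow> 'a) \<Rightarrow> nat list \<Rightarrow> bool" where
  "spans H b ns \<longleftrightarrow> (\<forall>x\<in>H. \<exists>a. x = (\<Sum>i<length ns. smul (a i) (b i)))"

lemma indepD: "indep b ns \<Longrightarrow> (\<Sum>i<length ns. smul (a i) (b i)) = (\<Sum>i<length ns. smul (c i) (b i))
      \<longleftrightarrow> (\<forall>i<length ns. a i mod ns ! i = c i mod ns ! i)"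
  unfolding indep_def by blast

lemma sum_indicator_smul_t:
  assumes "j < (r::nat)"
  shows "(\<Sum>i<r. smul (if i = j then t else 0) (b i)) = smul t (b j :: 'a::ab_group_add)"
proof -
  have "(\<Sum>i<r. smul (if i = j then t else 0) (b i)) = (\<Sum>i<r. if i = j then smul t (b i) else 0)"
    by (rule sum.cong) auto
  also have "\<dots> = smul t (b j)" using assms by (subst sum.delta) auto
  finally show ?thesis .
qed

lemma indep_ord:
  assumes "indep b ns" "j < length ns"
  shows "smul t (b j) = 0 \<longleftrightarrow> ns ! j dvd t"
proof -
  have "smul t (b j) = 0 \<longleftrightarrow> (\<Sum>i<length ns. smul (if i = j then t else 0) (b i)) = (\<Sum>i<length ns. smul 0 (b i))"
    using sum_indicator_smul_t[OF assms(2), of t b] by simp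
  also have "\<dots> \<longleftrightarrow> (\<forall>i<length ns. (if i = j then t else 0) mod ns ! i = 0 mod ns ! i)"
    by (rule indepD[OF assms(1)])
  also have "\<dots> \<longleftrightarrow> t mod ns ! j = 0"
    using assms(2) by (auto split: if_splits)
  finally show ?thesis by (simp add: mod_eq_0_iff_dvd)
qed

lemma sum_split_last:
  "(\<Sum>i<Suc r. smul (a i) ((\<lambda>i. if i < r then b' i else g) i)) = (\<Sum>i<r. smul (a i) (b' i)) + smul (a r) g"
  by (simp add: sum.lessThan_Suc)

lemma neg_smul_ord:
  assumes "smul m g = 0" "0 < m"
  shows "- smul a g = smul (m - a mod m) (g::'a::ab_group_add)"
proof -
  have "smul (a mod m) g + smul (m - a mod m) g = smul m g"
    using assms(2) by (simp add: smul_add_nat[symmetric])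
  then have "smul a g + smul (m - a mod m) g = 0" using assms smul_mod[OF assms(1)] by simp
  then show ?thesis by (simp add: neg_eq_iff_add_eq_0)
qed

theorem structure_subgrp:
  fixes H :: "'a::{ab_group_add,finite} set"
  assumes "subgrp H"
  shows "\<exists>b ns. chain ns \<and> indep b ns \<and> spans H b ns \<and> (\<forall>i<length ns. b i \<in> H)"
  using assms
proof (induction "card H" arbitrary: H rule: less_induct)
  case less
  note sH = less.prems
  show ?case
  proof (cases "\<exists>h\<in>H. h \<noteq> 0")
    case False
    then have "H \<subseteq> {0}" by blast
    then have "chain [] \<and> indep (\<lambda>_. 0::'a) [] \<and> spans H (\<lambda>_. 0) [] \<and> (\<forall>i<length []. (\<lambda>_. 0::'a) i \<in> H)"
      unfolding chain_def indep_def spans_def by auto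
    then show ?thesis by blast
  next
    case True
    then obtain h0 where h0: "h0 \<in> H" "h0 \<noteq> 0" by blast
    have fin: "finite (ord ` H)" by simp
    have ne: "ord ` H \<noteq> {}" using h0 by blast
    have "Max (ord ` H) \<in> ord ` H" using fin ne by (rule Max_in)
    then obtain g where gH: "g \<in> H" and gmax: "ord g = Max (ord ` H)" by auto
    have mx: "\<forall>h\<in>H. ord h \<le> ord g" using gmax fin by simp
    have expo: "\<forall>h\<in>H. smul (ord g) h = 0"
      using max_ord_dvd[OF sH gH mx] ord_dvd by blast
    define m where "m = ord g"
    have ord_gt1: "1 < ord h" if "h \<noteq> 0" for h :: 'a
    proof (rule ccontr)
      assume "\<not> 1 < ord h"
      then have "ord h = 1" using ord_pos[of h] by simp
      then have "smul 1 h = 0" using ord_smul[of h] by simp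
      then show False using that by simp
    qed
    have m1: "1 < m" unfolding m_def using ord_gt1[OF h0(2)] mx h0(1) by (meson less_le_trans)
    obtain K where sK: "subgrp K" and KH: "K \<subseteq> H" and Kg: "\<forall>t. smul t g \<in> K \<longrightarrow> smul t g = 0"
      and span: "\<forall>h\<in>H. \<exists>k\<in>K. \<exists>t. h = k + smul t g"
      using complement[OF sH gH expo] by blast
    have gK: "g \<notin> K"
    proof
      assume "g \<in> K" then have "smul 1 g \<in> K" by simp
      then have "smul 1 g = 0" using Kg by blast
      then have "g = 0" by simp
      then show False using m1 ord_gt1 unfolding m_def
        by (metis less_irrefl ord_min ord_smul smul_zero_el zero_less_one smul_one le_less_trans not_le)
    qed
    have "K \<subset> H" using KH gK gH by blast
    then have "card K < card H" by (simp add: psubset_card_mono)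
    then obtain b' ns' where ch': "chain ns'" and ind': "indep b' ns'" and sp': "spans K b' ns'"
      and bK: "\<forall>i<length ns'. b' i \<in> K"
      using less.hyps sK by blast
    define r where "r = length ns'"
    define ns where "ns = ns' @ [m]"
    define b where "b = (\<lambda>i. if i < r then b' i else g)"
    have lns: "length ns = Suc r" unfolding ns_def r_def by simp
    have nsi: "ns ! i = (if i < r then ns' ! i else m)" if "i < Suc r" for i
      using that unfolding ns_def r_def by (auto simp: nth_append)
    have sumb: "(\<Sum>i<length ns. smul (a i) (b i)) = (\<Sum>i<r. smul (a i) (b' i)) + smul (a r) g" for a
      unfolding lns b_def by (rule sum_split_last)
    have inK: "(\<Sum>i<r. smul (a i) (b' i)) \<in> K" for a
      using bK sK unfolding r_def by (intro subgrp_sum) (auto intro: subgrp_smul)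
    have chain: "chain ns"
    proof -
      have "\<forall>i<length ns. 1 < ns ! i"
        using ch' m1 unfolding chain_def lns by (auto simp: nsi r_def)
      moreover have "ns ! i dvd ns ! Suc i" if "Suc i < length ns" for i
      proof (cases "Suc i < r")
        case True then show ?thesis using ch' that unfolding chain_def lns by (simp add: nsi r_def)
      next
        case False
        then have ir: "i < r" "Suc i = r" using that lns by auto
        have "smul m (b' i) = 0" using expo bK KH ir unfolding m_def r_def by blast
        then have "ns' ! i dvd m" using indep_ord[OF ind'] ir unfolding r_def by blast
        then show ?thesis using ir that lns by (simp add: nsi)
      qed
      ultimately show ?thesis unfolding chain_def by blast
    qed
    have indep: "indep b ns"
      unfolding indep_def
    proof (intro allI)
      fix a c
      show "(\<Sum>i<length ns. smul (a i) (b i)) = (\<Sum>i<length ns. smul (c i) (b i))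
          \<longleftrightarrow> (\<forall>i<length ns. a i mod ns ! i = c i mod ns ! i)"
      proof
        assume eq: "(\<Sum>i<length ns. smul (a i) (b i)) = (\<Sum>i<length ns. smul (c i) (b i))"
        define X1 where "X1 = (\<Sum>i<r. smul (a i) (b' i))"
        define X2 where "X2 = (\<Sum>i<r. smul (c i) (b' i))"
        have e1: "X1 + smul (a r) g = X2 + smul (c r) g" using eq unfolding sumb X1_def X2_def .
        have "X1 - X2 = smul (c r) g + - smul (a r) g" using e1 by (simp add: algebra_simps)
        also have "- smul (a r) g = smul (m - a r mod m) g"
          using neg_smul_ord[of m g "a r"] ord_smul[of g] m1 unfolding m_def by simp
        also have "smul (c r) g + smul (m - a r mod m) g = smul (c r + (m - a r mod m)) g"
          by (simp add: smul_add_nat)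
        finally have d: "X1 - X2 = smul (c r + (m - a r mod m)) g" .
        have "X1 - X2 \<in> K" unfolding X1_def X2_def using sK inK by (intro subgrp_diff)
        then have "X1 - X2 = 0" using Kg d by simp
        then have x12: "X1 = X2" by simp
        then have gac: "smul (a r) g = smul (c r) g" using e1 by simp
        have A: "\<forall>i<r. a i mod ns' ! i = c i mod ns' ! i"
          using indepD[OF ind', of a c] x12 unfolding X1_def X2_def r_def by blast
        have B: "a r mod m = c r mod m" using gac smul_eq_iff unfolding m_def by blast
        show "\<forall>i<length ns. a i mod ns ! i = c i mod ns ! i"
          using A B lns nsi by (metis less_Suc_eq)
      next
        assume H: "\<forall>i<length ns. a i mod ns ! i = c i mod ns ! i"
        have A: "\<forall>i<r. a i mod ns' ! i = c i mod ns' ! i" using H lns nsi by (metis less_SucI)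
        have B: "a r mod m = c r mod m" using H lns nsi by (metis lessI less_irrefl)
        have "(\<Sum>i<r. smul (a i) (b' i)) = (\<Sum>i<r. smul (c i) (b' i))"
          using indepD[OF ind', of a c] A unfolding r_def by blast
        moreover have "smul (a r) g = smul (c r) g" using B smul_eq_iff unfolding m_def by blast
        ultimately show "(\<Sum>i<length ns. smul (a i) (b i)) = (\<Sum>i<length ns. smul (c i) (b i))"
          unfolding sumb by simp
      qed
    qed
    have spans: "spans H b ns"
      unfolding spans_def
    proof
      fix h assume "h \<in> H"
      then obtain k t where kt: "k \<in> K" "h = k + smul t g" using span by blast
      then obtain a where a: "k = (\<Sum>i<r. smul (a i) (b' i))" using sp' unfolding spans_def r_def by blast
      define a' where "a' = a(r := t)"
      have "(\<Sum>i<r. smul (a' i) (b' i)) = (\<Sum>i<r. smul (a i) (b' i))"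
        unfolding a'_def by (rule sum.cong) auto
      then have "h = (\<Sum>i<length ns. smul (a' i) (b i))"
        unfolding sumb using kt a by (simp add: a'_def)
      then show "\<exists>a. h = (\<Sum>i<length ns. smul (a i) (b i))" by blast
    qed
    have "\<forall>i<length ns. b i \<in> H" using bK KH gH unfolding b_def lns r_def by auto
    then show ?thesis using chain indep spans by blast
  qed
qed

section \<open>From a basis to an invariant decomposition\<close>

lemma indep_mod:
  assumes "indep b ns" "chain ns"
  shows "(\<Sum>i<length ns. smul (a i mod ns ! i) (b i)) = (\<Sum>i<length ns. smul (a i) (b i))"
  using indepD[OF assms(1), of "\<lambda>i. a i mod ns ! i" a] by simp

lemma basis_to_decomp:
  fixes b :: "nat \<Rightarrow> 'a::ab_group_add"
  assumes ch: "chain ns" and ind: "indep b ns" and sp: "spans UNIV b ns"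
  shows "is_inv_decomp TYPE('a) ns"
proof -
  define r where "r = length ns"
  have npos: "0 < ns ! i" if "i < r" for i using ch that unfolding chain_def r_def by auto
  define co where "co x = (SOME a. x = (\<Sum>i<r. smul (a i) (b i)))" for x
  have co: "x = (\<Sum>i<r. smul (co x i) (b i))" for x
  proof -
    have "\<exists>a. x = (\<Sum>i<r. smul (a i) (b i))" using sp unfolding spans_def r_def by blast
    then show ?thesis unfolding co_def by (rule someI_ex)
  qed
  define f where "f x = map (\<lambda>i. co x i mod ns ! i) [0..<r]" for x
  have fc: "f x \<in> cyc_carrier ns" for x
    unfolding f_def cyc_carrier_def r_def using npos r_def by auto
  have feq: "f x = f y \<longleftrightarrow> (\<forall>i<r. co x i mod ns ! i = co y i mod ns ! i)" for x y
    unfolding f_def by (auto simp: list_eq_iff_nth_eq)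
  have inj: "inj f"
  proof (rule injI)
    fix x y assume "f x = f y"
    then have "\<forall>i<r. co x i mod ns ! i = co y i mod ns ! i" using feq by blast
    then have "(\<Sum>i<r. smul (co x i) (b i)) = (\<Sum>i<r. smul (co y i) (b i))"
      using indepD[OF ind, of "co x" "co y"] unfolding r_def by blast
    have "x = (\<Sum>i<r. smul (co x i) (b i))" by (rule co)
    also have "\<dots> = (\<Sum>i<r. smul (co y i) (b i))" by fact
    also have "\<dots> = y" by (rule co[symmetric])
    finally show "x = y" .
  qed
  have surj: "f ` UNIV = cyc_carrier ns"
  proof
    show "f ` UNIV \<subseteq> cyc_carrier ns" using fc by blast
    show "cyc_carrier ns \<subseteq> f ` UNIV"
    proof
      fix w assume w: "w \<in> cyc_carrier ns"
      define x where "x = (\<Sum>i<r. smul (w ! i) (b i))"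
      have "(\<Sum>i<r. smul (co x i) (b i)) = x" by (rule co[symmetric])
      also have "x = (\<Sum>i<r. smul (w ! i) (b i))" by (rule x_def)
      finally have "(\<Sum>i<r. smul (co x i) (b i)) = (\<Sum>i<r. smul (w ! i) (b i))" .
      then have m: "\<forall>i<r. co x i mod ns ! i = w ! i mod ns ! i"
        using indepD[OF ind, of "co x" "\<lambda>i. w ! i"] unfolding r_def by blast
      have wl: "length w = r" and wb: "\<And>i. i < r \<Longrightarrow> w ! i < ns ! i"
        using w unfolding cyc_carrier_def r_def by auto
      have "f x = w"
      proof (rule nth_equalityI)
        show "length (f x) = length w" unfolding f_def using wl by simp
        fix i assume "i < length (f x)"
        then have i: "i < r" unfolding f_def by simp
        have "f x ! i = co x i mod ns ! i" unfolding f_def using i by simp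
        also have "\<dots> = w ! i mod ns ! i" using m i by blast
        also have "\<dots> = w ! i" using wb[OF i] by simp
        finally show "f x ! i = w ! i" .
      qed
      then show "w \<in> f ` UNIV" by blast
    qed
  qed
  have hom: "f (x + y) = cyc_add ns (f x) (f y)" for x y
  proof -
    have "(\<Sum>i<r. smul (co (x + y) i) (b i)) = x + y" by (rule co[symmetric])
    also have "\<dots> = (\<Sum>i<r. smul (co x i) (b i)) + (\<Sum>i<r. smul (co y i) (b i))"
      using co[of x] co[of y] by (rule arg_cong2[where f="(+)"])
    also have "\<dots> = (\<Sum>i<r. smul (co x i + co y i) (b i))" by (simp add: smul_add_nat sum.distrib)
    finally have "(\<Sum>i<r. smul (co (x + y) i) (b i)) = (\<Sum>i<r. smul (co x i + co y i) (b i))" .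
    then have m: "\<forall>i<r. co (x + y) i mod ns ! i = (co x i + co y i) mod ns ! i"
      using indepD[OF ind, of "co (x + y)" "\<lambda>i. co x i + co y i"] unfolding r_def by blast
    show ?thesis
    proof (rule nth_equalityI)
      show "length (f (x + y)) = length (cyc_add ns (f x) (f y))"
        unfolding f_def cyc_add_def r_def by simp
      fix i assume "i < length (f (x + y))"
      then have i: "i < r" unfolding f_def by simp
      have "f (x + y) ! i = (co x i + co y i) mod ns ! i" unfolding f_def using i m by simp
      also have "\<dots> = (co x i mod ns ! i + co y i mod ns ! i) mod ns ! i" by (simp add: mod_add_eq)
      also have "\<dots> = cyc_add ns (f x) (f y) ! i" unfolding cyc_add_def f_def using i r_def by simp
      finally show "f (x + y) ! i = cyc_add ns (f x) (f y) ! i" .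
    qed
  qed
  have "bij_betw f UNIV (cyc_carrier ns)" using inj surj by (simp add: bij_betw_def)
  then show ?thesis unfolding is_inv_decomp_def using ch hom unfolding chain_def by blast
qed

section \<open>From an invariant decomposition to a basis\<close>

lemma double_mod: "w < (n::nat) \<Longrightarrow> (w + w) mod n = w \<Longrightarrow> w = 0"
proof (cases "w + w < n")
  case True
  assume "(w + w) mod n = w" then show ?thesis using True by simp
next
  case False
  assume w: "w < n" "(w + w) mod n = w"
  have "(w + w) mod n = (w + w - n) mod n" using False by (simp add: le_mod_geq)
  also have "\<dots> = w + w - n" using w(1) by simp
  finally show ?thesis using w by simp
qed

lemma decomp_to_basis:
  assumes dec: "is_inv_decomp TYPE('a::ab_group_add) ns"
  shows "\<exists>b::nat \<Rightarrow> 'a. chain ns \<and> indep b ns \<and> spans UNIV b ns"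
proof -
  have ch: "chain ns" using dec unfolding is_inv_decomp_def chain_def by blast
  obtain f :: "'a \<Rightarrow> nat list" where bij: "bij_betw f UNIV (cyc_carrier ns)"
    and hom: "\<And>x y. f (x + y) = cyc_add ns (f x) (f y)"
    using dec unfolding is_inv_decomp_def by blast
  define r where "r = length ns"
  have npos: "1 < ns ! i" if "i < r" for i using ch that unfolding chain_def r_def by auto
  have fc: "f x \<in> cyc_carrier ns" for x using bij by (auto simp: bij_betw_def)
  have fl: "length (f x) = r" for x using fc[of x] unfolding cyc_carrier_def r_def by simp
  have fb: "f x ! i < ns ! i" if "i < r" for x i using fc[of x] that unfolding cyc_carrier_def r_def by simp
  have injf: "inj f" using bij by (simp add: bij_betw_def)
  have hom_nth: "f (x + y) ! i = (f x ! i + f y ! i) mod ns ! i" if "i < r" for x y i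
    using hom[of x y] that unfolding cyc_add_def r_def by simp
  have f0: "f 0 ! i = 0" if "i < r" for i
  proof -
    have "(f 0 ! i + f 0 ! i) mod ns ! i = f 0 ! i" using hom_nth[OF that, of 0 0] by simp
    then show ?thesis using double_mod fb[OF that] by blast
  qed
  have fsmul: "f (smul t x) ! i = (t * f x ! i) mod ns ! i" if "i < r" for t x i
  proof (induction t)
    case 0 then show ?case using f0[OF that] by simp
  next
    case (Suc t)
    have "f (smul (Suc t) x) ! i = (f x ! i + f (smul t x) ! i) mod ns ! i" using hom_nth[OF that] by simp
    also have "\<dots> = (f x ! i + t * f x ! i) mod ns ! i" using Suc by (simp add: mod_add_right_eq)
    finally show ?case by simp
  qed
  have fsum: "f (\<Sum>i<m. g i) ! j = (\<Sum>i<m. f (g i) ! j) mod ns ! j" if "j < r" for m :: nat and g j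
  proof (induction m)
    case 0 then show ?case using f0[OF that] by simp
  next
    case (Suc m)
    have "f (\<Sum>i<Suc m. g i) ! j = f ((\<Sum>i<m. g i) + g m) ! j" by simp
    also have "\<dots> = (f (\<Sum>i<m. g i) ! j + f (g m) ! j) mod ns ! j" using hom_nth[OF that] by simp
    also have "\<dots> = ((\<Sum>i<m. f (g i) ! j) + f (g m) ! j) mod ns ! j" using Suc by (simp add: mod_add_left_eq)
    finally show ?case by simp
  qed
  define u where "u i = map (\<lambda>j. if j = i then 1 else (0::nat)) [0..<r]" for i :: nat
  have uc: "u i \<in> cyc_carrier ns" for i unfolding u_def cyc_carrier_def r_def using npos r_def by (auto intro: less_trans[OF zero_less_one])
  define b where "b i = inv_into UNIV f (u i)" for i
  have fbi: "f (b i) = u i" for i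
    unfolding b_def using uc bij by (simp add: bij_betw_def f_inv_into_f)
  have fcomb: "f (\<Sum>i<r. smul (a i) (b i)) ! j = a j mod ns ! j" if "j < r" for a j
  proof -
    have "f (\<Sum>i<r. smul (a i) (b i)) ! j = (\<Sum>i<r. (a i * u i ! j) mod ns ! j) mod ns ! j"
      using fsum[OF that] fsmul[OF that] fbi by simp
    also have "(\<Sum>i<r. (a i * u i ! j) mod ns ! j) = (\<Sum>i<r. if i = j then a j mod ns ! j else 0)"
      by (rule sum.cong) (auto simp: u_def that)
    also have "\<dots> = a j mod ns ! j" using that by (subst sum.delta) auto
    finally show ?thesis by simp
  qed
  have flist: "f (\<Sum>i<r. smul (a i) (b i)) = map (\<lambda>j. a j mod ns ! j) [0..<r]" for a
    using fcomb fl by (auto simp: list_eq_iff_nth_eq)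
  have ind: "indep b ns"
    unfolding indep_def
  proof (intro allI)
    fix a c
    have "(\<Sum>i<length ns. smul (a i) (b i)) = (\<Sum>i<length ns. smul (c i) (b i))
        \<longleftrightarrow> f (\<Sum>i<r. smul (a i) (b i)) = f (\<Sum>i<r. smul (c i) (b i))"
      using injf unfolding r_def by (auto dest: injD)
    also have "\<dots> \<longleftrightarrow> (\<forall>i<length ns. a i mod ns ! i = c i mod ns ! i)"
      unfolding flist by (auto simp: map_eq_conv r_def)
    finally show "(\<Sum>i<length ns. smul (a i) (b i)) = (\<Sum>i<length ns. smul (c i) (b i))
        \<longleftrightarrow> (\<forall>i<length ns. a i mod ns ! i = c i mod ns ! i)" .
  qed
  have sp: "spans UNIV b ns"
    unfolding spans_def
  proof
    fix x :: 'a
    define w where "w = f x"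
    have "f (\<Sum>i<r. smul (w ! i) (b i)) = w"
      unfolding flist using fl fb unfolding w_def by (auto simp: list_eq_iff_nth_eq)
    then have "x = (\<Sum>i<r. smul (w ! i) (b i))" using injf unfolding w_def by (auto dest: injD)
    then show "\<exists>a. x = (\<Sum>i<length ns. smul (a i) (b i))" unfolding r_def by blast
  qed
  show ?thesis using ch ind sp by blast
qed

lemma chain_dvd:
  assumes "chain ns" "i \<le> j" "j < length ns"
  shows "ns ! i dvd ns ! j"
  using assms(2,3)
proof (induction j)
  case 0 then show ?case by simp
next
  case (Suc j)
  show ?case
  proof (cases "i = Suc j")
    case True then show ?thesis by simp
  next
    case False
    then have "ns ! i dvd ns ! j" using Suc by simp
    moreover have "ns ! j dvd ns ! Suc j" using assms(1) Suc.prems unfolding chain_def by blast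
    ultimately show ?thesis by (rule dvd_trans)
  qed
qed

lemma smul_lin_comb: "smul p (\<Sum>i<r. smul (a i) (b i)) = (\<Sum>i<(r::nat). smul (p * a i) (b i))"
  by (simp add: smul_sum_el smul_mult)

definition tors :: "nat \<Rightarrow> 'a::ab_group_add set" where
  "tors p = {x. smul p x = 0}"

lemma tors_lower:
  fixes b :: "nat \<Rightarrow> 'a::{ab_group_add,finite}"
  assumes ch: "chain ns" and ind: "indep b ns" and r: "0 < length ns"
    and p: "prime p" "p dvd ns ! 0"
  shows "p ^ length ns \<le> card (tors p :: 'a set)"
proof -
  define r where "r = length ns"
  have p2: "2 \<le> p" using p(1) by (simp add: prime_ge_2_nat)
  have pd: "p dvd ns ! i" if "i < r" for i
    using dvd_trans[OF p(2) chain_dvd[OF ch, of 0 i]] that unfolding r_def by simp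
  define q where "q i = ns ! i div p" for i
  have nq: "ns ! i = p * q i" if "i < r" for i using pd[OF that] unfolding q_def by simp
  have qpos: "0 < q i" if "i < r" for i using nq[OF that] ch that unfolding chain_def r_def
    by (metis gr0I mult_0_right not_less_zero less_trans zero_less_one)
  define L where "L = {l. set l \<subseteq> {..<p} \<and> length l = r}"
  have cL: "card L = p ^ r" unfolding L_def using card_lists_length_eq[of "{..<p}" r] by simp
  define \<phi> where "\<phi> l = (\<Sum>i<r. smul (l ! i * q i) (b i))" for l
  have img: "\<phi> ` L \<subseteq> tors p"
  proof
    fix x assume "x \<in> \<phi> ` L"
    then obtain l where l: "l \<in> L" "x = \<phi> l" by blast
    have "smul p x = (\<Sum>i<r. smul (p * (l ! i * q i)) (b i))" unfolding l(2) \<phi>_def by (rule smul_lin_comb)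
    also have "\<dots> = (\<Sum>i<r. smul 0 (b i))"
    proof -
      have "\<forall>i<r. (p * (l ! i * q i)) mod ns ! i = 0 mod ns ! i"
        using nq by (simp add: mult.left_commute)
      then show ?thesis using indepD[OF ind, of "\<lambda>i. p * (l ! i * q i)" "\<lambda>_. 0"] unfolding r_def by blast
    qed
    finally show "x \<in> tors p" unfolding tors_def by simp
  qed
  have inj: "inj_on \<phi> L"
  proof (rule inj_onI)
    fix l l' assume l: "l \<in> L" "l' \<in> L" "\<phi> l = \<phi> l'"
    then have m: "\<forall>i<r. (l ! i * q i) mod ns ! i = (l' ! i * q i) mod ns ! i"
      using indepD[OF ind, of "\<lambda>i. l ! i * q i" "\<lambda>i. l' ! i * q i"] unfolding \<phi>_def r_def by blast
    show "l = l'"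
    proof (rule nth_equalityI)
      show "length l = length l'" using l unfolding L_def by simp
      fix i assume "i < length l"
      then have i: "i < r" using l unfolding L_def by simp
      have li: "l ! i < p" "l' ! i < p" using l i unfolding L_def by (auto simp: subset_iff)
      have "l ! i * q i < ns ! i" using li(1) qpos[OF i] nq[OF i] by simp
      moreover have "l' ! i * q i < ns ! i" using li(2) qpos[OF i] nq[OF i] by simp
      moreover have "(l ! i * q i) mod ns ! i = (l' ! i * q i) mod ns ! i" using m i by blast
      ultimately have "l ! i * q i = l' ! i * q i" by simp
      then show "l ! i = l' ! i" using qpos[OF i] by simp
    qed
  qed
  have "card L \<le> card (tors p :: 'a set)" by (rule card_inj_on_le[OF inj img]) simp
  then show ?thesis using cL unfolding r_def by simp
qed

lemma tors_upper:
  fixes b :: "nat \<Rightarrow> 'a::{ab_group_add,finite}"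
  assumes ch: "chain ns" and ind: "indep b ns" and sp: "spans UNIV b ns" and p: "0 < p"
  shows "card (tors p :: 'a set) \<le> p ^ length ns"
proof -
  define r where "r = length ns"
  have npos: "0 < ns ! i" if "i < r" for i using ch that unfolding chain_def r_def by auto
  define co where "co x = (SOME a. x = (\<Sum>i<r. smul (a i) (b i)))" for x
  have co: "x = (\<Sum>i<r. smul (co x i) (b i))" for x
  proof -
    have "\<exists>a. x = (\<Sum>i<r. smul (a i) (b i))" using sp unfolding spans_def r_def by blast
    then show ?thesis unfolding co_def by (rule someI_ex)
  qed
  define c where "c x i = co x i mod ns ! i" for x i
  have cx: "x = (\<Sum>i<r. smul (c x i) (b i))" for x
  proof -
    have "x = (\<Sum>i<r. smul (co x i) (b i))" by (rule co)
    also have "\<dots> = (\<Sum>i<r. smul (c x i) (b i))"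
      unfolding c_def r_def by (rule indep_mod[OF ind ch, symmetric])
    finally show ?thesis .
  qed
  have cb: "c x i < ns ! i" if "i < r" for x i unfolding c_def using npos[OF that] by simp
  define L where "L = {l. set l \<subseteq> {..<p} \<and> length l = r}"
  have cL: "card L = p ^ r" unfolding L_def using card_lists_length_eq[of "{..<p}" r] by simp
  have fL: "finite L" unfolding L_def using finite_lists_length_eq[of "{..<p}" r] by simp
  define \<psi> where "\<psi> x = map (\<lambda>i. c x i * p div ns ! i) [0..<r]" for x
  have dv: "ns ! i dvd c x i * p" if "x \<in> tors p" "i < r" for x i
  proof -
    have "smul p x = 0" using that(1) unfolding tors_def by simp
    then have "(\<Sum>i<r. smul (p * c x i) (b i)) = (\<Sum>i<r. smul 0 (b i))"
      using smul_lin_comb[where p=p and a="c x" and r=r and b=b] cx[of x] by simp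
    then have "\<forall>i<r. (p * c x i) mod ns ! i = 0 mod ns ! i"
      using indepD[OF ind, of "\<lambda>i. p * c x i" "\<lambda>_. 0"] unfolding r_def by blast
    then show ?thesis using that(2) by (simp add: mod_eq_0_iff_dvd mult.commute)
  qed
  have img: "\<psi> ` tors p \<subseteq> L"
  proof
    fix y assume "y \<in> \<psi> ` tors p"
    then obtain x where x: "x \<in> tors p" "y = \<psi> x" by blast
    have "c x i * p div ns ! i < p" if "i < r" for i
      using cb[OF that, of x] npos[OF that] p by (simp add: div_less_iff_less_mult mult.commute)
    then show "y \<in> L" unfolding x(2) \<psi>_def L_def by auto
  qed
  have inj: "inj_on \<psi> (tors p)"
  proof (rule inj_onI)
    fix x y assume xy: "x \<in> tors p" "y \<in> tors p" "\<psi> x = \<psi> y"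
    have e: "c x i = c y i" if i: "i < r" for i
    proof -
      have "c x i * p div ns ! i = c y i * p div ns ! i"
        using xy(3) i unfolding \<psi>_def by (metis (no_types, lifting) diff_zero length_map length_upt nth_map nth_upt add_0)
      then have "c x i * p = c y i * p"
        using dv[OF xy(1) i] dv[OF xy(2) i] by (metis dvd_div_mult_self)
      then show ?thesis using p by simp
    qed
    have "x = (\<Sum>i<r. smul (c x i) (b i))" by (rule cx)
    also have "\<dots> = (\<Sum>i<r. smul (c y i) (b i))" using e by simp
    also have "\<dots> = y" by (rule cx[symmetric])
    finally show "x = y" .
  qed
  have "card (tors p :: 'a set) \<le> card L" by (rule card_inj_on_le[OF inj img fL])
  then show ?thesis using cL unfolding r_def by simp
qed

lemma decomp_len_le:
  assumes "is_inv_decomp TYPE('a::{ab_group_add,finite}) ns" "is_inv_decomp TYPE('a) ms"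
  shows "length ns \<le> length ms"
proof (cases "length ns = 0")
  case True then show ?thesis by simp
next
  case False
  obtain b :: "nat \<Rightarrow> 'a" where b: "chain ns" "indep b ns" "spans UNIV b ns"
    using decomp_to_basis[OF assms(1)] by blast
  obtain b' :: "nat \<Rightarrow> 'a" where b': "chain ms" "indep b' ms" "spans UNIV b' ms"
    using decomp_to_basis[OF assms(2)] by blast
  have "1 < ns ! 0" using b(1) False unfolding chain_def by auto
  then obtain p where p: "prime p" "p dvd ns ! 0" using prime_factor_nat[of "ns ! 0"] by auto
  have "p ^ length ns \<le> card (tors p :: 'a set)" using tors_lower[OF b(1,2) _ p] False by simp
  also have "\<dots> \<le> p ^ length ms" using tors_upper[OF b'] p(1) by (simp add: prime_gt_0_nat)
  finally show ?thesis by (rule power_le_imp_le_exp[OF prime_gt_1_nat[OF p(1)]])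
qed

lemma exists_decomp: "\<exists>ns. is_inv_decomp TYPE('a::{ab_group_add,finite}) ns"
proof -
  have "subgrp (UNIV :: 'a set)" unfolding subgrp_def by simp
  then obtain b :: "nat \<Rightarrow> 'a" and ns where "chain ns" "indep b ns" "spans UNIV b ns"
    using structure_subgrp by blast
  then show ?thesis using basis_to_decomp by blast
qed

lemma group_rank_eq:
  assumes "is_inv_decomp TYPE('a::{ab_group_add,finite}) ns"
  shows "group_rank TYPE('a) = length ns"
  unfolding group_rank_def
proof (rule the_equality)
  show "\<exists>ms. is_inv_decomp TYPE('a) ms \<and> length ms = length ns" using assms by blast
  fix r assume "\<exists>ms. is_inv_decomp TYPE('a) ms \<and> length ms = r"
  then obtain ms where "is_inv_decomp TYPE('a) ms" "length ms = r" by blast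
  then show "r = length ns" using decomp_len_le[OF assms] decomp_len_le[OF _ assms] by (metis le_antisym)
qed

lemma in_delta_star: "Delta (G0::'a::ab_group_add set) \<noteq> {} \<Longrightarrow> Inf (Delta G0) = D \<Longrightarrow> D \<in> delta_star TYPE('a)"
  unfolding delta_star_def by blast

lemma L1_star:
  fixes v :: "nat \<Rightarrow> 'a::ab_group_add"
  assumes n2: "2 \<le> n" and k1: "1 \<le> k" and nk: "n \<noteq> k + 1"
    and ind: "\<And>a c. (\<Sum>i<k. smul (a i) (v i)) = (\<Sum>i<k. smul (c i) (v i)) \<longleftrightarrow> (\<forall>i<k. a i mod n = c i mod n)"
  shows "nat \<bar>int n - int k - 1\<bar> \<in> delta_star TYPE('a)"
proof -
  interpret L: L1 v k n "- (\<Sum>i<k. v i)"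
    by unfold_locales (use n2 k1 nk ind in auto)
  show ?thesis using L.L1_result in_delta_star by blast
qed

lemma L2_star:
  fixes v :: "nat \<Rightarrow> 'a::ab_group_add"
  assumes n2: "2 \<le> n" and k2: "2 \<le> k"
    and ind: "\<And>a c. (\<Sum>i<k. smul (a i) (v i)) = (\<Sum>i<k. smul (c i) (v i)) \<longleftrightarrow> (\<forall>i<k. a i mod n = c i mod n)"
  shows "k - 1 \<in> delta_star TYPE('a)"
proof -
  interpret L: L2 v k n "(\<Sum>i<k. v i)"
    by unfold_locales (use n2 k2 ind in auto)
  show ?thesis using L.L2_result in_delta_star by blast
qed

lemma subfam:
  fixes b :: "nat \<Rightarrow> 'a::ab_group_add"
  assumes ind: "indep b ns" and kr: "k \<le> length ns"
    and nq: "\<And>i. i < k \<Longrightarrow> ns ! i = n * q i" and qpos: "\<And>i. i < k \<Longrightarrow> 0 < q i"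
  shows "(\<Sum>i<k. smul (a i) (smul (q i) (b i))) = (\<Sum>i<k. smul (c i) (smul (q i) (b i)))
     \<longleftrightarrow> (\<forall>i<k. a i mod n = c i mod n)"
proof -
  define r where "r = length ns"
  define A where "A i = (if i < k then a i * q i else 0)" for i
  define C where "C i = (if i < k then c i * q i else 0)" for i
  have sA: "(\<Sum>i<k. smul (a i) (smul (q i) (b i))) = (\<Sum>i<r. smul (A i) (b i))"
    if "A = (\<lambda>i. if i < k then a i * q i else 0)" for a A
  proof -
    have "(\<Sum>i<r. smul (A i) (b i)) = (\<Sum>i<k. smul (a i * q i) (b i))"
      by (rule sum.mono_neutral_cong_right) (use kr that in \<open>auto simp: r_def\<close>)
    then show ?thesis by (simp add: smul_mult)
  qed
  have "(\<Sum>i<k. smul (a i) (smul (q i) (b i))) = (\<Sum>i<k. smul (c i) (smul (q i) (b i)))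
      \<longleftrightarrow> (\<Sum>i<r. smul (A i) (b i)) = (\<Sum>i<r. smul (C i) (b i))"
    using sA[of A a] sA[of C c] unfolding A_def C_def by simp
  also have "\<dots> \<longleftrightarrow> (\<forall>i<r. A i mod ns ! i = C i mod ns ! i)"
    unfolding r_def by (rule indepD[OF ind])
  also have "\<dots> \<longleftrightarrow> (\<forall>i<k. a i mod n = c i mod n)"
  proof
    assume H: "\<forall>i<r. A i mod ns ! i = C i mod ns ! i"
    show "\<forall>i<k. a i mod n = c i mod n"
    proof (intro allI impI)
      fix i assume i: "i < k"
      then have "A i mod ns ! i = C i mod ns ! i" using H kr unfolding r_def by auto
      then have "(a i * q i) mod (n * q i) = (c i * q i) mod (n * q i)"
        using i nq[OF i] unfolding A_def C_def by simp
      then have "(a i mod n) * q i = (c i mod n) * q i" by (simp add: mult_mod_left)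
      then show "a i mod n = c i mod n" using qpos[OF i] by simp
    qed
  next
    assume H: "\<forall>i<k. a i mod n = c i mod n"
    show "\<forall>i<r. A i mod ns ! i = C i mod ns ! i"
    proof (intro allI impI)
      fix i assume i: "i < r"
      show "A i mod ns ! i = C i mod ns ! i"
      proof (cases "i < k")
        case True
        have "(a i mod n) * q i = (c i mod n) * q i" using H True by simp
        then have "(a i * q i) mod (n * q i) = (c i * q i) mod (n * q i)" by (simp add: mult_mod_left)
        then show ?thesis using True nq[OF True] unfolding A_def C_def by simp
      next
        case False then show ?thesis unfolding A_def C_def by simp
      qed
    qed
  qed
  finally show ?thesis .
qed

lemma group_exp_eq:
  fixes b :: "nat \<Rightarrow> 'a::{ab_group_add,finite}"
  assumes ch: "chain ns" and ind: "indep b ns" and sp: "spans UNIV b ns" and r: "0 < length ns"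
  shows "group_exp TYPE('a) = ns ! (length ns - 1)"
proof -
  define N where "N = ns ! (length ns - 1)"
  have all: "smul N g = 0" for g :: 'a
  proof -
    obtain a where a: "g = (\<Sum>i<length ns. smul (a i) (b i))" using sp unfolding spans_def by blast
    have "smul N g = (\<Sum>i<length ns. smul (N * a i) (b i))" unfolding a by (rule smul_lin_comb)
    also have "\<dots> = (\<Sum>i<length ns. smul 0 (b i))"
    proof -
      have "\<forall>i<length ns. (N * a i) mod ns ! i = 0 mod ns ! i"
      proof (intro allI impI)
        fix i assume i: "i < length ns"
        have "ns ! i dvd N" unfolding N_def using chain_dvd[OF ch, of i "length ns - 1"] i by simp
        then show "(N * a i) mod ns ! i = 0 mod ns ! i" by simp
      qed
      then show ?thesis using indepD[OF ind, of "\<lambda>i. N * a i" "\<lambda>_. 0"] by blast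
    qed
    finally show ?thesis by simp
  qed
  have "length ns - 1 < length ns" using r by simp
  then have "1 < N" using ch unfolding chain_def N_def by blast
  then have Npos: "0 < N" by simp
  have mn: "N \<le> m" if "0 < m" "\<forall>g::'a. smul m g = 0" for m
  proof -
    have "smul m (b (length ns - 1)) = 0" using that by blast
    then have "N dvd m" using indep_ord[OF ind, of "length ns - 1"] r unfolding N_def by simp
    then show ?thesis using that(1) by (simp add: dvd_imp_le)
  qed
  show ?thesis
    unfolding group_exp_def sum_lessThan_smul N_def[symmetric]
    by (rule Least_equality) (use Npos all mn in auto)
qed

lemma basis_ord:
  fixes b :: "nat \<Rightarrow> 'a::{ab_group_add,finite}"
  assumes ch: "chain ns" and ind: "indep b ns" and j: "j < length ns"
  shows "ord (b j) = ns ! j"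
proof (rule ord_eq_iff)
  show "0 < ns ! j" using ch j unfolding chain_def by auto
  show "\<forall>t. smul t (b j) = 0 \<longleftrightarrow> ns ! j dvd t" using indep_ord[OF ind j] by blast
qed

theorem lemma6p17:
  assumes "card (UNIV :: 'a::{ab_group_add, finite} set) \<ge> 3"
  shows "{1..group_rank TYPE('a) - 1} \<subseteq> delta_star TYPE('a)
    \<and> (\<forall>d. 3 \<le> d \<and> d dvd group_exp TYPE('a) \<longrightarrow> d - 2 \<in> delta_star TYPE('a))
    \<and> (\<forall>n r. 2 \<le> n \<and> 1 \<le> r \<and> n \<noteq> r + 1 \<and> is_inv_decomp TYPE('a) (replicate r n)
           \<longrightarrow> nat \<bar>int n - int r - 1\<bar> \<in> delta_star TYPE('a))
    \<and> Max (delta_star TYPE('a)) \<ge> max (group_rank TYPE('a) - 1) (group_exp TYPE('a) - 2)"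
proof -
  obtain ns where dec: "is_inv_decomp TYPE('a) ns" using exists_decomp by blast
  obtain b :: "nat \<Rightarrow> 'a" where ch: "chain ns" and ind: "indep b ns" and sp: "spans UNIV b ns"
    using decomp_to_basis[OF dec] by blast
  define r where "r = length ns"
  have rank: "group_rank TYPE('a) = r" unfolding r_def by (rule group_rank_eq[OF dec])
  have r0: "0 < r"
  proof (rule ccontr)
    assume "\<not> 0 < r"
    then have "r = 0" by simp
    then have "\<forall>x::'a. x = 0" using sp unfolding spans_def r_def by simp
    then have "(UNIV :: 'a set) \<subseteq> {0}" by blast
    then have "card (UNIV :: 'a set) \<le> card {0::'a}" by (rule card_mono[rotated]) simp
    then show False using assms by simp
  qed
  define N where "N = ns ! (r - 1)"
  have expo: "group_exp TYPE('a) = N" unfolding N_def r_def by (rule group_exp_eq[OF ch ind sp]) (use r0 r_def in simp)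
  have n0: "2 \<le> ns ! 0" using ch r0 unfolding chain_def r_def by auto
  have P1: "{1..group_rank TYPE('a) - 1} \<subseteq> delta_star TYPE('a)"
  proof
    fix j assume "j \<in> {1..group_rank TYPE('a) - 1}"
    then have j: "1 \<le> j" "j + 1 \<le> r" using rank by auto
    define k where "k = j + 1"
    define q where "q i = ns ! i div ns ! 0" for i
    have nq: "ns ! i = ns ! 0 * q i" if "i < k" for i
      using chain_dvd[OF ch, of 0 i] that j unfolding q_def k_def r_def by simp
    have qpos: "0 < q i" if "i < k" for i
    proof -
      have "1 < ns ! i" using ch that j unfolding chain_def k_def r_def by auto
      then show ?thesis using nq[OF that] by (metis gr0I mult_0_right not_less_zero less_trans zero_less_one)
    qed
    have kr: "k \<le> length ns" using j unfolding k_def r_def by simp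
    have indk: "(\<Sum>i<k. smul (a i) ((\<lambda>i. smul (q i) (b i)) i)) = (\<Sum>i<k. smul (c i) ((\<lambda>i. smul (q i) (b i)) i))
       \<longleftrightarrow> (\<forall>i<k. a i mod ns ! 0 = c i mod ns ! 0)" for a c
      using subfam[OF ind kr nq qpos] by simp
    have "k - 1 \<in> delta_star TYPE('a)"
      by (rule L2_star[OF n0 _ indk]) (use j in \<open>simp add: k_def\<close>)
    then show "j \<in> delta_star TYPE('a)" unfolding k_def by simp
  qed
  have P2: "\<forall>d. 3 \<le> d \<and> d dvd group_exp TYPE('a) \<longrightarrow> d - 2 \<in> delta_star TYPE('a)"
  proof (intro allI impI)
    fix d assume d: "3 \<le> d \<and> d dvd group_exp TYPE('a)"
    then obtain q where q: "N = d * q" using expo by (auto elim: dvdE)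
    have r1: "r - 1 < length ns" using r0 r_def by simp
    have ordb: "ord (b (r - 1)) = N" unfolding N_def using basis_ord[OF ch ind r1] .
    have qpos: "0 < q" using q ordb ord_pos[of "b (r - 1)"] by (metis gr0I mult_0_right not_less_zero)
    define v where "v i = smul q (b (r - 1))" for i :: nat
    have indv: "(\<Sum>i<1. smul (a i) (v i)) = (\<Sum>i<1. smul (c i) (v i)) \<longleftrightarrow> (\<forall>i<1. a i mod d = c i mod d)" for a c
    proof -
      have "(\<Sum>i<1. smul (a i) (v i)) = (\<Sum>i<1. smul (c i) (v i))
          \<longleftrightarrow> smul (a 0 * q) (b (r - 1)) = smul (c 0 * q) (b (r - 1))"
        unfolding v_def by (simp add: smul_mult)
      also have "\<dots> \<longleftrightarrow> (a 0 * q) mod (d * q) = (c 0 * q) mod (d * q)"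
        using smul_eq_iff ordb q by metis
      also have "\<dots> \<longleftrightarrow> (a 0 mod d) * q = (c 0 mod d) * q" by (simp add: mult_mod_left)
      also have "\<dots> \<longleftrightarrow> a 0 mod d = c 0 mod d" using qpos by simp
      finally show ?thesis by simp
    qed
    have "nat \<bar>int d - int 1 - 1\<bar> \<in> delta_star TYPE('a)"
      by (rule L1_star[where v=v]) (use d indv in auto)
    moreover have "nat \<bar>int d - int 1 - 1\<bar> = d - 2" using d by simp
    ultimately show "d - 2 \<in> delta_star TYPE('a)" by metis
  qed
  have P3: "\<forall>n r. 2 \<le> n \<and> 1 \<le> r \<and> n \<noteq> r + 1 \<and> is_inv_decomp TYPE('a) (replicate r n)
           \<longrightarrow> nat \<bar>int n - int r - 1\<bar> \<in> delta_star TYPE('a)"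
  proof (intro allI impI)
    fix n r' assume H: "2 \<le> n \<and> 1 \<le> r' \<and> n \<noteq> r' + 1 \<and> is_inv_decomp TYPE('a) (replicate r' n)"
    obtain b' :: "nat \<Rightarrow> 'a" where b': "chain (replicate r' n)" "indep b' (replicate r' n)"
      using decomp_to_basis H by blast
    have indk: "(\<Sum>i<r'. smul (a i) ((\<lambda>i. smul 1 (b' i)) i)) = (\<Sum>i<r'. smul (c i) ((\<lambda>i. smul 1 (b' i)) i))
       \<longleftrightarrow> (\<forall>i<r'. a i mod n = c i mod n)" for a c
      using subfam[OF b'(2), where k=r' and n=n and q="\<lambda>_. 1"] by simp
    show "nat \<bar>int n - int r' - 1\<bar> \<in> delta_star TYPE('a)"
      by (rule L1_star[OF _ _ _ indk]) (use H in auto)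
  qed
  have fin: "finite (delta_star TYPE('a))"
  proof -
    have "delta_star TYPE('a) \<subseteq> (\<lambda>G0::'a set. Inf (Delta G0)) ` UNIV" unfolding delta_star_def by blast
    then show ?thesis by (rule finite_subset) simp
  qed
  have P4: "Max (delta_star TYPE('a)) \<ge> max (group_rank TYPE('a) - 1) (group_exp TYPE('a) - 2)"
  proof (cases "group_exp TYPE('a) - 2 \<le> group_rank TYPE('a) - 1")
    case True
    show ?thesis
    proof (cases "group_rank TYPE('a) - 1 = 0")
      case True then show ?thesis using \<open>group_exp TYPE('a) - 2 \<le> _\<close> by simp
    next
      case False
      then have "group_rank TYPE('a) - 1 \<in> delta_star TYPE('a)" using P1 by auto
      then show ?thesis using True Max_ge[OF fin] by (simp add: max_def)
    qed
  next
    case False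
    then have e3: "3 \<le> group_exp TYPE('a)" by simp
    then have "group_exp TYPE('a) - 2 \<in> delta_star TYPE('a)" using P2 by simp
    then show ?thesis using False Max_ge[OF fin] by (simp add: max_def)
  qed
  show ?thesis using P1 P2 P3 P4 by blast
qed

end
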